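(* Let $\{f_j^\lambda\}$ be a parametrized IFS satisfying (MA1)–(MA4) and (MT) on $U\subset\mathbb R^d$. For every $\lambda_0\in U$ and $\beta>0$ there exist $c_\beta>0$ and an open ball $J=B(\lambda_0,\varepsilon_0)$ with the following property: for every $\omega,\tau\in\Sigma$ there exists a unit vector $e\in\mathbb R^d$ such that for every $p\in B(0,\varepsilon_0)\cap\mathrm{span}(e)^\perp$ and all $t\in J_p=\{t\in\mathbb R:p+te\in B(0,\varepsilon_0)\}$, $$|\Pi^{\lambda_0+p+te}(\omega)-\Pi^{\lambda_0+p+te}(\tau)|<c_\beta d_{\lambda_0}(\omega,\tau)^{1+\beta}\implies\Big|\tfrac d{dt}\big(\Pi^{\lambda_0+p+te}(\omega)-\Pi^{\lambda_0+p+te}(\tau)\big)\Big|\ge c_\beta d_{\lambda_0}(\omega,\tau)^{1+\beta}.$$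
   Context: Setup: $X\subset\mathbb R$ compact interval, $\mathcal A=\{1,\dots,m\}$, $\Sigma=\mathcal A^{\mathbb N}$, $\mathbf i\wedge\mathbf j$ longest common prefix, $f^\lambda_\omega$ compositions, $\Pi^\lambda(\mathbf i)=\lim_nf^\lambda_{\mathbf i|_n}(x)$, $d_\lambda(\mathbf i,\mathbf j)=|f^\lambda_{\mathbf i\wedge\mathbf j}(X)|$ (and $0$ if $\mathbf i=\mathbf j$). $U\subset\mathbb R^d$ bounded open. (MA1)–(MA4), $\delta\in(0,1)$: $f^\lambda_j$ is $C^{2+\delta}$ in $x$, $C^{1+\delta}$ in $\lambda$, with continuous mixed partials, these derivatives uniformly bounded and uniformly $\delta$-Hölder in $x$ and $\lambda$; $0<\gamma_1\le|\frac d{dx}f^\lambda_j|\le\gamma_2<1$. (MT): $\exists\eta>0$ $\forall\lambda\in\overline U$, $\mathbf i,\mathbf j$ with $i_1\ne j_1$: $|\Pi^\lambda(\mathbf i)-\Pi^\lambda(\mathbf j)|<\eta\Rightarrow|\nabla_\lambda(\Pi^\lambda(\mathbf i)-\Pi^\lambda(\mathbf j))|\ge\eta$. *)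

theory Defs
  imports "HOL-Analysis.Analysis"
begin

text \<open>Symbolic space: infinite words over the alphabet {1..m}, indexed from 0
  (so the paper's i_1 is \<omega> 0).\<close>
definition seqs :: "nat \<Rightarrow> (nat \<Rightarrow> nat) set" where
  "seqs m = {\<omega>. \<forall>n. \<omega> n \<in> {1..m}}"

definition fcomp :: "(nat \<Rightarrow> 'a \<Rightarrow> real \<Rightarrow> real) \<Rightarrow> 'a \<Rightarrow> nat list \<Rightarrow> real \<Rightarrow> real" where
  "fcomp f l ws = foldr (\<lambda>j g. f j l \<circ> g) ws id"

definition pref :: "(nat \<Rightarrow> nat) \<Rightarrow> nat \<Rightarrow> nat list" where
  "pref \<omega> n = map \<omega> [0..<n]"

definition proj :: "(nat \<Rightarrow> 'a \<Rightarrow> real \<Rightarrow> real) \<Rightarrow> real \<Rightarrow> 'a \<Rightarrow> (nat \<Rightarrow> nat) \<Rightarrow> real" where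
  "proj f x l \<omega> = lim (\<lambda>n. fcomp f l (pref \<omega> n) x)"

definition common :: "(nat \<Rightarrow> nat) \<Rightarrow> (nat \<Rightarrow> nat) \<Rightarrow> nat list" where
  "common \<omega> \<tau> = pref \<omega> (LEAST n. \<omega> n \<noteq> \<tau> n)"

definition dsym :: "(nat \<Rightarrow> 'a \<Rightarrow> real \<Rightarrow> real) \<Rightarrow> real set \<Rightarrow> 'a \<Rightarrow> (nat \<Rightarrow> nat) \<Rightarrow> (nat \<Rightarrow> nat) \<Rightarrow> real" where
  "dsym f X l \<omega> \<tau> = (if \<omega> = \<tau> then 0 else diameter (fcomp f l (common \<omega> \<tau>) ` X))"

definition MA :: "(nat \<Rightarrow> 'a::euclidean_space \<Rightarrow> real \<Rightarrow> real) \<Rightarrow> nat \<Rightarrow> real set \<Rightarrow> 'a set \<Rightarrow> real \<Rightarrow> bool" where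
  "MA f m X U \<delta> \<longleftrightarrow>
    (\<exists>fx fxx (fl :: nat \<Rightarrow> 'a \<Rightarrow> real \<Rightarrow> 'a) flx M \<gamma>1 \<gamma>2.
       0 < \<gamma>1 \<and> \<gamma>1 \<le> \<gamma>2 \<and> \<gamma>2 < 1 \<and>
       (\<forall>j\<in>{1..m}. \<forall>l\<in>closure U. f j l ` X \<subseteq> X \<and>
          (\<forall>x\<in>X.
             (f j l has_real_derivative fx j l x) (at x within X) \<and>
             (fx j l has_real_derivative fxx j l x) (at x within X) \<and>
             ((\<lambda>\<mu>. f j \<mu> x) has_derivative (\<lambda>h. fl j l x \<bullet> h)) (at l within closure U) \<and>
             ((\<lambda>y. fl j l y) has_vector_derivative flx j l x) (at x within X) \<and>
             ((\<lambda>\<mu>. fx j \<mu> x) has_derivative (\<lambda>h. flx j l x \<bullet> h)) (at l within closure U) \<and>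
             \<gamma>1 \<le> \<bar>fx j l x\<bar> \<and> \<bar>fx j l x\<bar> \<le> \<gamma>2 \<and>
             \<bar>fxx j l x\<bar> \<le> M \<and> norm (fl j l x) \<le> M \<and> norm (flx j l x) \<le> M)) \<and>
       (\<forall>j\<in>{1..m}. continuous_on (closure U \<times> X) (\<lambda>(l, x). flx j l x)) \<and>
       (\<forall>j\<in>{1..m}. \<forall>l\<in>closure U. \<forall>\<mu>\<in>closure U. \<forall>x\<in>X. \<forall>y\<in>X.
          \<bar>fx j l x - fx j l y\<bar> \<le> M * \<bar>x - y\<bar> powr \<delta> \<and>
          \<bar>fx j l x - fx j \<mu> x\<bar> \<le> M * norm (l - \<mu>) powr \<delta> \<and>
          \<bar>fxx j l x - fxx j l y\<bar> \<le> M * \<bar>x - y\<bar> powr \<delta> \<and>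
          \<bar>fxx j l x - fxx j \<mu> x\<bar> \<le> M * norm (l - \<mu>) powr \<delta> \<and>
          norm (fl j l x - fl j l y) \<le> M * \<bar>x - y\<bar> powr \<delta> \<and>
          norm (fl j l x - fl j \<mu> x) \<le> M * norm (l - \<mu>) powr \<delta> \<and>
          norm (flx j l x - flx j l y) \<le> M * \<bar>x - y\<bar> powr \<delta> \<and>
          norm (flx j l x - flx j \<mu> x) \<le> M * norm (l - \<mu>) powr \<delta>))"

text \<open>Transversality condition (MT); Pi is computed with base point x0 \<in> X.\<close>
definition MT :: "(nat \<Rightarrow> 'a::euclidean_space \<Rightarrow> real \<Rightarrow> real) \<Rightarrow> nat \<Rightarrow> real \<Rightarrow> 'a set \<Rightarrow> bool" where
  "MT f m x0 U \<longleftrightarrow>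
    (\<exists>\<eta>>0. \<forall>l\<in>closure U. \<forall>\<omega>\<in>seqs m. \<forall>\<tau>\<in>seqs m.
       \<omega> 0 \<noteq> \<tau> 0 \<and> \<bar>proj f x0 l \<omega> - proj f x0 l \<tau>\<bar> < \<eta> \<longrightarrow>
       (\<exists>g. ((\<lambda>\<mu>. proj f x0 \<mu> \<omega> - proj f x0 \<mu> \<tau>) has_derivative (\<lambda>h. g \<bullet> h)) (at l within closure U)
            \<and> \<eta> \<le> norm g))"

end

theory Submission
  imports Defs
begin

lemma contract_bound:
  fixes \<phi> :: "'b \<Rightarrow> real"
  assumes cl: "\<And>x. x\<in>P \<Longrightarrow> sh x \<in> P" and bd: "\<And>x. x\<in>P \<Longrightarrow> \<phi> x \<le> B"
    and rec: "\<And>x. x\<in>P \<Longrightarrow> \<phi> x \<le> A + q * \<phi> (sh x)"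
    and q: "0 \<le> q" "q < 1" and A: "0 \<le> A" and x: "x \<in> P"
  shows "\<phi> x \<le> A / (1 - q)"
proof -
  have gs: "(\<Sum>i<n. q^i) \<le> 1/(1-q)" for n
    using q by (simp add: sum_gp_strict divide_right_mono)
  have ind: "\<forall>x\<in>P. \<phi> x \<le> A * (\<Sum>i<n. q^i) + q^n * B" for n
  proof (induction n)
    case 0 then show ?case using bd by simp
  next
    case (Suc n)
    show ?case
    proof
      fix x assume x: "x \<in> P"
      have "\<phi> x \<le> A + q * \<phi> (sh x)" using rec x .
      also have "\<dots> \<le> A + q * (A * (\<Sum>i<n. q^i) + q^n * B)"
        using Suc cl[OF x] q by (intro add_left_mono mult_left_mono) auto
      also have "\<dots> = A * (\<Sum>i<Suc n. q^i) + q^Suc n * B"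
        unfolding sum.lessThan_Suc_shift by (simp add: sum_distrib_left algebra_simps)
      finally show "\<phi> x \<le> A * (\<Sum>i<Suc n. q^i) + q^Suc n * B" .
    qed
  qed
  have le: "\<phi> x \<le> A/(1-q) + q^n * B" for n
  proof -
    have "A * (\<Sum>i<n. q^i) \<le> A * (1/(1-q))" using gs[of n] A by (rule mult_left_mono)
    then show ?thesis using ind[of n] x by auto
  qed
  have "(\<lambda>n. A/(1-q) + q^n * B) \<longlonglongrightarrow> A/(1-q) + 0 * B"
    using q by (intro tendsto_intros) auto
  then have "(\<lambda>n. A/(1-q) + q^n * B) \<longlonglongrightarrow> A/(1-q)" by simp
  then show ?thesis
    by (rule LIMSEQ_le_const) (use le in auto)
qed

definition Gs :: "('b \<Rightarrow> 'b) \<Rightarrow> ('b \<Rightarrow> 'c::banach) \<Rightarrow> ('b \<Rightarrow> real) \<Rightarrow> 'b \<Rightarrow> 'c" where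
  "Gs sh \<alpha> \<beta> x = (\<Sum>n. (\<Prod>i<n. \<beta> ((sh^^i) x)) *\<^sub>R \<alpha> ((sh^^n) x))"

lemma Gs_props:
  fixes \<alpha> :: "'b \<Rightarrow> 'c::banach"
  assumes cl: "\<And>x. x\<in>P \<Longrightarrow> sh x \<in> P" and a: "\<And>x. x\<in>P \<Longrightarrow> norm (\<alpha> x) \<le> K"
    and b: "\<And>x. x\<in>P \<Longrightarrow> \<bar>\<beta> x\<bar> \<le> q" and q: "0 \<le> q" "q < 1" and x: "x \<in> P"
  shows "Gs sh \<alpha> \<beta> x = \<alpha> x + \<beta> x *\<^sub>R Gs sh \<alpha> \<beta> (sh x)"
    and "norm (Gs sh \<alpha> \<beta> x) \<le> K / (1 - q)"
proof -
  have pw: "(sh^^n) y \<in> P" if "y \<in> P" for n y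
    using that by (induction n) (auto intro: cl)
  have tb: "norm ((\<Prod>i<n. \<beta> ((sh^^i) y)) *\<^sub>R \<alpha> ((sh^^n) y)) \<le> K * q^n" if "y\<in>P" for n y
  proof -
    have "\<bar>\<Prod>i<n. \<beta> ((sh^^i) y)\<bar> \<le> q^n"
      unfolding abs_prod using prod_mono[of "{..<n}" "\<lambda>i. \<bar>\<beta> ((sh^^i) y)\<bar>" "\<lambda>_. q"] b pw[OF that]
      by simp
    moreover have "norm (\<alpha> ((sh^^n) y)) \<le> K" using a pw[OF that] .
    ultimately show ?thesis
      by (simp add: mult.commute mult_mono')
  qed
  have Kp: "0 \<le> K" using a[OF x] norm_ge_zero order_trans by blast
  have sg: "summable (\<lambda>n. K * q^n)" using q by (simp add: summable_geometric)
  have sm: "summable (\<lambda>n. (\<Prod>i<n. \<beta> ((sh^^i) y)) *\<^sub>R \<alpha> ((sh^^n) y))" if "y\<in>P" for y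
    by (rule summable_comparison_test'[OF sg]) (use tb[OF that] in auto)
  have smn: "summable (\<lambda>n. norm ((\<Prod>i<n. \<beta> ((sh^^i) y)) *\<^sub>R \<alpha> ((sh^^n) y)))" if "y\<in>P" for y
    by (rule summable_comparison_test'[OF sg]) (use tb[OF that] in auto)
  have "(\<Sum>n. (\<Prod>i<Suc n. \<beta> ((sh^^i) x)) *\<^sub>R \<alpha> ((sh^^Suc n) x))
      = (\<Sum>n. \<beta> x *\<^sub>R ((\<Prod>i<n. \<beta> ((sh^^i) (sh x))) *\<^sub>R \<alpha> ((sh^^n) (sh x))))"
    unfolding prod.lessThan_Suc_shift by (simp add: funpow_Suc_right del: funpow.simps)
  also have "\<dots> = \<beta> x *\<^sub>R Gs sh \<alpha> \<beta> (sh x)"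
    unfolding Gs_def using sm[OF cl[OF x]] by (rule suminf_scaleR_right[symmetric])
  finally show "Gs sh \<alpha> \<beta> x = \<alpha> x + \<beta> x *\<^sub>R Gs sh \<alpha> \<beta> (sh x)"
    using suminf_split_head[OF sm[OF x]] unfolding Gs_def by simp
  have "norm (Gs sh \<alpha> \<beta> x) \<le> (\<Sum>n. norm ((\<Prod>i<n. \<beta> ((sh^^i) x)) *\<^sub>R \<alpha> ((sh^^n) x)))"
    unfolding Gs_def by (rule summable_norm[OF smn[OF x]])
  also have "\<dots> \<le> (\<Sum>n. K * q^n)"
    by (rule suminf_le[OF _ smn[OF x] sg]) (use tb[OF x] in auto)
  also have "\<dots> = K / (1 - q)" using q by (simp add: suminf_mult suminf_geometric summable_geometric divide_simps)
  finally show "norm (Gs sh \<alpha> \<beta> x) \<le> K / (1 - q)" .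
qed

locale ifs =
  fixes f :: "nat \<Rightarrow> 'a::euclidean_space \<Rightarrow> real \<Rightarrow> real" and m :: nat and a b \<delta> :: real
    and S :: "'a set" and fx fxx :: "nat \<Rightarrow> 'a \<Rightarrow> real \<Rightarrow> real" and fl flx :: "nat \<Rightarrow> 'a \<Rightarrow> real \<Rightarrow> 'a"
    and M \<gamma>1 \<gamma>2 :: real
  assumes ab: "a < b" and dl: "0 < \<delta>" "\<delta> \<le> 1" and cS: "convex S"
    and dS: "\<And>l \<mu>. l\<in>S \<Longrightarrow> \<mu>\<in>S \<Longrightarrow> norm (l - \<mu>) \<le> 1"
    and gm: "0 < \<gamma>1" "\<gamma>1 \<le> \<gamma>2" "\<gamma>2 < 1" and Mp: "0 < M"
    and inX: "\<And>j l x. j\<in>{1..m} \<Longrightarrow> l\<in>S \<Longrightarrow> x\<in>{a..b} \<Longrightarrow> f j l x \<in> {a..b}"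
    and dx: "\<And>j l x. j\<in>{1..m} \<Longrightarrow> l\<in>S \<Longrightarrow> x\<in>{a..b} \<Longrightarrow> (f j l has_real_derivative fx j l x) (at x within {a..b})"
    and dxx: "\<And>j l x. j\<in>{1..m} \<Longrightarrow> l\<in>S \<Longrightarrow> x\<in>{a..b} \<Longrightarrow> (fx j l has_real_derivative fxx j l x) (at x within {a..b})"
    and dlm: "\<And>j l x. j\<in>{1..m} \<Longrightarrow> l\<in>S \<Longrightarrow> x\<in>{a..b} \<Longrightarrow> ((\<lambda>\<mu>. f j \<mu> x) has_derivative (\<lambda>h. fl j l x \<bullet> h)) (at l within S)"
    and dlx: "\<And>j l x. j\<in>{1..m} \<Longrightarrow> l\<in>S \<Longrightarrow> x\<in>{a..b} \<Longrightarrow> ((\<lambda>y. fl j l y) has_vector_derivative flx j l x) (at x within {a..b})"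
    and bfx: "\<And>j l x. j\<in>{1..m} \<Longrightarrow> l\<in>S \<Longrightarrow> x\<in>{a..b} \<Longrightarrow> \<gamma>1 \<le> \<bar>fx j l x\<bar> \<and> \<bar>fx j l x\<bar> \<le> \<gamma>2"
    and bnd: "\<And>j l x. j\<in>{1..m} \<Longrightarrow> l\<in>S \<Longrightarrow> x\<in>{a..b} \<Longrightarrow> \<bar>fxx j l x\<bar> \<le> M \<and> norm (fl j l x) \<le> M \<and> norm (flx j l x) \<le> M"
    and hfx: "\<And>j l \<mu> x. j\<in>{1..m} \<Longrightarrow> l\<in>S \<Longrightarrow> \<mu>\<in>S \<Longrightarrow> x\<in>{a..b} \<Longrightarrow> \<bar>fx j l x - fx j \<mu> x\<bar> \<le> M * norm (l - \<mu>) powr \<delta>"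
    and hfl: "\<And>j l \<mu> x. j\<in>{1..m} \<Longrightarrow> l\<in>S \<Longrightarrow> \<mu>\<in>S \<Longrightarrow> x\<in>{a..b} \<Longrightarrow> norm (fl j l x - fl j \<mu> x) \<le> M * norm (l - \<mu>) powr \<delta>"
begin

lemma seg_sub: "x\<in>{a..b} \<Longrightarrow> y\<in>{a..b} \<Longrightarrow> closed_segment x y \<subseteq> {a..b}"
  by (rule closed_segment_subset) auto

lemma f_lip_x:
  assumes "j\<in>{1..m}" "l\<in>S" "x\<in>{a..b}" "y\<in>{a..b}"
  shows "\<bar>f j l x - f j l y\<bar> \<le> \<gamma>2 * \<bar>x - y\<bar>"
  using field_differentiable_bound[of "{a..b}" "f j l" "fx j l" \<gamma>2 x y] dx bfx assms by auto

lemma fx_lip: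
  assumes "j\<in>{1..m}" "l\<in>S" "x\<in>{a..b}" "y\<in>{a..b}"
  shows "\<bar>fx j l x - fx j l y\<bar> \<le> M * \<bar>x - y\<bar>"
  using field_differentiable_bound[of "{a..b}" "fx j l" "fxx j l" M x y] dxx bnd assms by auto

lemma fl_lip:
  assumes "j\<in>{1..m}" "l\<in>S" "x\<in>{a..b}" "y\<in>{a..b}"
  shows "norm (fl j l x - fl j l y) \<le> M * \<bar>x - y\<bar>"
proof -
  have "norm (fl j l x - fl j l y) \<le> M * norm (x - y)"
  proof (rule differentiable_bound[of "{a..b}" "fl j l" "\<lambda>z h. h *\<^sub>R flx j l z"])
    show "convex {a..b}" by simp
    show "((fl j l) has_derivative (\<lambda>h. h *\<^sub>R flx j l z)) (at z within {a..b})" if "z\<in>{a..b}" for z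
      using dlx[OF assms(1,2) that] by (simp add: has_vector_derivative_def)
    show "onorm (\<lambda>h. h *\<^sub>R flx j l z) \<le> M" if "z\<in>{a..b}" for z
      using bnd[OF assms(1,2) that] onorm_scaleR_left[of "\<lambda>h::real. h" "flx j l z"]
      by (simp add: onorm_id bounded_linear_ident)
  qed (use assms in auto)
  then show ?thesis by simp
qed

lemma f_lip_l:
  assumes "j\<in>{1..m}" "l\<in>S" "\<mu>\<in>S" "x\<in>{a..b}"
  shows "\<bar>f j l x - f j \<mu> x\<bar> \<le> M * norm (l - \<mu>)"
proof -
  have "norm (f j l x - f j \<mu> x) \<le> M * norm (l - \<mu>)"
  proof (rule differentiable_bound[of S "\<lambda>\<nu>. f j \<nu> x" "\<lambda>\<nu> h. fl j \<nu> x \<bullet> h"])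
    show "onorm (\<lambda>h. fl j \<nu> x \<bullet> h) \<le> M" if "\<nu>\<in>S" for \<nu>
      using onorm_inner_right[of "\<lambda>h. h" "fl j \<nu> x"] bnd[OF assms(1) that assms(4)]
      by (simp add: onorm_id bounded_linear_ident)
  qed (use assms cS dlm in auto)
  then show ?thesis by simp
qed

lemma taylor_x:
  assumes "j\<in>{1..m}" "l\<in>S" "x\<in>{a..b}" "y\<in>{a..b}"
  shows "\<bar>f j l y - f j l x - fx j l x * (y - x)\<bar> \<le> M * (y - x)^2"
proof -
  let ?T = "closed_segment x y"
  have T: "?T \<subseteq> {a..b}" using seg_sub assms by auto
  have "norm ((f j l y - fx j l x * y) - (f j l x - fx j l x * x)) \<le> (M * \<bar>y - x\<bar>) * norm (y - x)"
  proof (rule field_differentiable_bound[of ?T "\<lambda>z. f j l z - fx j l x * z" "\<lambda>z. fx j l z - fx j l x"])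
    show "((\<lambda>z. f j l z - fx j l x * z) has_field_derivative fx j l z - fx j l x) (at z within ?T)"
      if "z \<in> ?T" for z
    proof -
      have "(f j l has_real_derivative fx j l z) (at z within ?T)"
        using has_field_derivative_subset[OF dx[OF assms(1,2)] T] that T by auto
      then show ?thesis by (auto intro!: derivative_eq_intros)
    qed
    show "norm (fx j l z - fx j l x) \<le> M * \<bar>y - x\<bar>" if "z \<in> ?T" for z
    proof -
      have "\<bar>z - x\<bar> \<le> \<bar>y - x\<bar>" using segment_bound1[OF that] by simp
      then show ?thesis using fx_lip[OF assms(1,2), of z x] that T assms Mp
        by (smt (verit, best) mult_left_mono real_norm_def subsetD)
    qed
  qed auto
  then show ?thesis by (simp add: algebra_simps power2_eq_square abs_mult)
qed

lemma taylor_l: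
  assumes "j\<in>{1..m}" "l\<in>S" "\<mu>\<in>S" "y\<in>{a..b}"
  shows "\<bar>f j \<mu> y - f j l y - fl j l y \<bullet> (\<mu> - l)\<bar> \<le> M * norm (\<mu> - l) powr \<delta> * norm (\<mu> - l)"
proof -
  let ?T = "closed_segment l \<mu>"
  have T: "?T \<subseteq> S" using closed_segment_subset assms cS by blast
  have "norm ((f j \<mu> y - fl j l y \<bullet> \<mu>) - (f j l y - fl j l y \<bullet> l)) \<le> (M * norm (\<mu> - l) powr \<delta>) * norm (\<mu> - l)"
  proof (rule differentiable_bound[of ?T "\<lambda>\<nu>. f j \<nu> y - fl j l y \<bullet> \<nu>" "\<lambda>\<nu> h. (fl j \<nu> y - fl j l y) \<bullet> h"])
    show "((\<lambda>\<nu>. f j \<nu> y - fl j l y \<bullet> \<nu>) has_derivative (\<lambda>h. (fl j \<nu> y - fl j l y) \<bullet> h)) (at \<nu> within ?T)"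
      if "\<nu> \<in> ?T" for \<nu>
    proof -
      have "((\<lambda>\<nu>. f j \<nu> y - fl j l y \<bullet> \<nu>) has_derivative (\<lambda>h. fl j \<nu> y \<bullet> h - fl j l y \<bullet> h)) (at \<nu> within ?T)"
      proof -
        have "((\<lambda>\<nu>. f j \<nu> y) has_derivative (\<lambda>h. fl j \<nu> y \<bullet> h)) (at \<nu> within ?T)"
          using has_derivative_subset[OF dlm[OF assms(1) _ assms(4)] T] that T by auto
        then show ?thesis by (auto intro!: derivative_eq_intros)
      qed
      then show ?thesis by (simp add: inner_diff_left)
    qed
    show "onorm (\<lambda>h. (fl j \<nu> y - fl j l y) \<bullet> h) \<le> M * norm (\<mu> - l) powr \<delta>" if "\<nu> \<in> ?T" for \<nu>
    proof -
      have "onorm (\<lambda>h. (fl j \<nu> y - fl j l y) \<bullet> h) \<le> norm (fl j \<nu> y - fl j l y)"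
        using onorm_inner_right[of "\<lambda>h. h" "fl j \<nu> y - fl j l y"] by (simp add: onorm_id bounded_linear_ident)
      also have "\<dots> \<le> M * norm (\<nu> - l) powr \<delta>" using hfl[OF assms(1) _ assms(2,4), of \<nu>] that T by auto
      also have "\<dots> \<le> M * norm (\<mu> - l) powr \<delta>"
        using segment_bound1[OF that] dl Mp by (intro mult_left_mono powr_mono2) auto
      finally show ?thesis .
    qed
  qed auto
  then show ?thesis by (simp add: algebra_simps inner_diff_right)
qed

lemma taylor:
  assumes "j\<in>{1..m}" "l\<in>S" "\<mu>\<in>S" "x\<in>{a..b}" "y\<in>{a..b}"
  shows "\<bar>f j \<mu> y - f j l x - fl j l x \<bullet> (\<mu> - l) - fx j l x * (y - x)\<bar>
     \<le> M * (norm (\<mu> - l) powr \<delta> * norm (\<mu> - l) + \<bar>y - x\<bar> * norm (\<mu> - l) + (y - x)^2)"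
proof -
  have 1: "\<bar>f j \<mu> y - f j l y - fl j l y \<bullet> (\<mu> - l)\<bar> \<le> M * norm (\<mu> - l) powr \<delta> * norm (\<mu> - l)"
    using taylor_l assms by auto
  have 2: "\<bar>(fl j l y - fl j l x) \<bullet> (\<mu> - l)\<bar> \<le> M * \<bar>y - x\<bar> * norm (\<mu> - l)"
    using Cauchy_Schwarz_ineq2[of "fl j l y - fl j l x" "\<mu> - l"] fl_lip[OF assms(1,2,5,4)]
    by (smt (verit, best) mult_right_mono norm_ge_zero)
  have 3: "\<bar>f j l y - f j l x - fx j l x * (y - x)\<bar> \<le> M * (y - x)^2"
    using taylor_x assms by auto
  have "f j \<mu> y - f j l x - fl j l x \<bullet> (\<mu> - l) - fx j l x * (y - x)
     = (f j \<mu> y - f j l y - fl j l y \<bullet> (\<mu> - l)) + (fl j l y - fl j l x) \<bullet> (\<mu> - l)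
       + (f j l y - f j l x - fx j l x * (y - x))"
    by (simp add: inner_diff_left)
  then show ?thesis using 1 2 3 by (simp add: algebra_simps)
qed

end

definition shf :: "(nat \<Rightarrow> nat) \<Rightarrow> nat \<Rightarrow> nat" where "shf \<omega> = (\<lambda>i. \<omega> (Suc i))"
definition shn :: "nat \<Rightarrow> (nat \<Rightarrow> nat) \<Rightarrow> nat \<Rightarrow> nat" where "shn k \<omega> = (\<lambda>i. \<omega> (k + i))"

lemma fcomp_Nil[simp]: "fcomp f l [] x = x" by (simp add: fcomp_def)
lemma fcomp_Cons[simp]: "fcomp f l (j # w) x = f j l (fcomp f l w x)" by (simp add: fcomp_def)
lemma fcomp_append: "fcomp f l (u @ v) x = fcomp f l u (fcomp f l v x)"
  by (induction u) auto

lemma pref_Suc: "pref \<omega> (Suc n) = \<omega> 0 # pref (shf \<omega>) n"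
  unfolding pref_def shf_def by (induction n) auto

lemma pref_add: "pref \<omega> (n + p) = pref \<omega> n @ pref (shn n \<omega>) p"
  unfolding pref_def shn_def by (induction p) auto

lemma pref_0[simp]: "pref \<omega> 0 = []" by (simp add: pref_def)
lemma length_pref[simp]: "length (pref \<omega> n) = n" by (simp add: pref_def)

lemma seqs_shf: "\<omega> \<in> seqs m \<Longrightarrow> shf \<omega> \<in> seqs m" by (simp add: seqs_def shf_def)
lemma seqs_shn: "\<omega> \<in> seqs m \<Longrightarrow> shn k \<omega> \<in> seqs m" by (simp add: seqs_def shn_def)
lemma seqs_pref: "\<omega> \<in> seqs m \<Longrightarrow> set (pref \<omega> n) \<subseteq> {1..m}" by (auto simp: seqs_def pref_def)
lemma seqs_0: "\<omega> \<in> seqs m \<Longrightarrow> \<omega> i \<in> {1..m}" by (simp add: seqs_def)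
lemma shn_Suc: "shn (Suc k) \<omega> = shn k (shf \<omega>)" by (simp add: shn_def shf_def)
lemma shn_0[simp]: "shn 0 \<omega> = \<omega>" by (simp add: shn_def)

context ifs begin

lemma fc_X: "set w \<subseteq> {1..m} \<Longrightarrow> l\<in>S \<Longrightarrow> x\<in>{a..b} \<Longrightarrow> fcomp f l w x \<in> {a..b}"
proof (induction w)
  case (Cons j w) then show ?case using inX[of j l "fcomp f l w x"] by auto
qed simp

lemma fc_lip: "set w \<subseteq> {1..m} \<Longrightarrow> l\<in>S \<Longrightarrow> x\<in>{a..b} \<Longrightarrow> y\<in>{a..b} \<Longrightarrow>
  \<bar>fcomp f l w x - fcomp f l w y\<bar> \<le> \<gamma>2 ^ length w * \<bar>x - y\<bar>"
proof (induction w)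
  case (Cons j w)
  have "\<bar>fcomp f l (j#w) x - fcomp f l (j#w) y\<bar> \<le> \<gamma>2 * \<bar>fcomp f l w x - fcomp f l w y\<bar>"
    using f_lip_x[of j l "fcomp f l w x" "fcomp f l w y"] fc_X Cons.prems by auto
  also have "\<dots> \<le> \<gamma>2 * (\<gamma>2 ^ length w * \<bar>x - y\<bar>)" using Cons gm by (intro mult_left_mono) auto
  finally show ?case by simp
qed simp

lemma diam_X: "x\<in>{a..b} \<Longrightarrow> y\<in>{a..b} \<Longrightarrow> \<bar>x - y\<bar> \<le> b - a" by auto

lemma pow_small: "\<exists>N. \<gamma>2 ^ N * (b - a) < e" if "0 < e"
proof -
  have "0 < e/(b-a)" using that ab by simp
  then obtain N where "\<gamma>2 ^ N < e / (b - a)"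
    using real_arch_pow_inv[of "e/(b-a)" \<gamma>2] gm by blast
  then show ?thesis using ab by (auto simp: field_simps)
qed

lemma fc_pref_tail:
  assumes "\<omega> \<in> seqs m" "l \<in> S" "N \<le> n"
  shows "\<exists>y\<in>{a..b}. fcomp f l (pref \<omega> n) a = fcomp f l (pref \<omega> N) y"
proof -
  obtain p where n: "n = N + p" using assms(3) le_Suc_ex by blast
  show ?thesis
    using fc_X[OF seqs_pref[OF seqs_shn[OF assms(1)]] assms(2), of a N p] ab
    by (auto simp: n pref_add fcomp_append)
qed

lemma proj_conv:
  assumes "\<omega> \<in> seqs m" "l \<in> S"
  shows "(\<lambda>n. fcomp f l (pref \<omega> n) a) \<longlonglongrightarrow> proj f a l \<omega>"
proof -
  let ?s = "\<lambda>n. fcomp f l (pref \<omega> n) a"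
  have "Cauchy ?s"
  proof (rule metric_CauchyI)
    fix e :: real assume "0 < e"
    then obtain N where N: "\<gamma>2 ^ N * (b - a) < e" using pow_small by blast
    have "dist (?s i) (?s j) < e" if ij: "N \<le> i" "N \<le> j" for i j
    proof -
      obtain y where y: "y\<in>{a..b}" "?s i = fcomp f l (pref \<omega> N) y"
        using fc_pref_tail[OF assms ij(1)] by blast
      obtain z where z: "z\<in>{a..b}" "?s j = fcomp f l (pref \<omega> N) z"
        using fc_pref_tail[OF assms ij(2)] by blast
      note yz = y(1) z(1) y(2) z(2)
      have "\<bar>?s i - ?s j\<bar> \<le> \<gamma>2 ^ N * \<bar>y - z\<bar>"
        using fc_lip[OF seqs_pref[OF assms(1)] assms(2) yz(1,2)] yz by simp
      also have "\<dots> \<le> \<gamma>2 ^ N * (b - a)" using yz gm by (intro mult_left_mono) auto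
      finally show ?thesis using N by (simp add: dist_real_def)
    qed
    then show "\<exists>M. \<forall>i\<ge>M. \<forall>j\<ge>M. dist (?s i) (?s j) < e" by blast
  qed
  then show ?thesis unfolding proj_def by (simp add: Cauchy_convergent_iff convergent_LIMSEQ_iff)
qed

lemma proj_X: "\<omega> \<in> seqs m \<Longrightarrow> l \<in> S \<Longrightarrow> proj f a l \<omega> \<in> {a..b}"
proof -
  assume as: "\<omega> \<in> seqs m" "l \<in> S"
  have inx: "fcomp f l (pref \<omega> n) a \<in> {a..b}" for n using fc_X[OF seqs_pref[OF as(1)] as(2)] ab by auto
  have "a \<le> proj f a l \<omega>" using inx by (intro LIMSEQ_le_const[OF proj_conv[OF as]]) auto
  moreover have "proj f a l \<omega> \<le> b" using inx by (intro LIMSEQ_le_const2[OF proj_conv[OF as]]) auto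
  ultimately show ?thesis by auto
qed

lemma proj_approx:
  assumes "\<omega> \<in> seqs m" "l \<in> S"
  shows "\<bar>proj f a l \<omega> - fcomp f l (pref \<omega> N) a\<bar> \<le> \<gamma>2 ^ N * (b - a)"
proof -
  have "(\<lambda>n. \<bar>fcomp f l (pref \<omega> n) a - fcomp f l (pref \<omega> N) a\<bar>) \<longlonglongrightarrow> \<bar>proj f a l \<omega> - fcomp f l (pref \<omega> N) a\<bar>"
    by (intro tendsto_intros proj_conv[OF assms])
  moreover have "\<bar>fcomp f l (pref \<omega> n) a - fcomp f l (pref \<omega> N) a\<bar> \<le> \<gamma>2 ^ N * (b - a)" if le: "N \<le> n" for n
  proof -
    obtain y where y: "y\<in>{a..b}" "fcomp f l (pref \<omega> n) a = fcomp f l (pref \<omega> N) y"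
      using fc_pref_tail[OF assms le] by blast
    have "\<bar>fcomp f l (pref \<omega> N) y - fcomp f l (pref \<omega> N) a\<bar> \<le> \<gamma>2 ^ N * \<bar>y - a\<bar>"
      using fc_lip[OF seqs_pref[OF assms(1)] assms(2) y(1)] ab by simp
    also have "\<dots> \<le> \<gamma>2 ^ N * (b - a)" using y gm by (intro mult_left_mono) auto
    finally show ?thesis using y by simp
  qed
  ultimately show ?thesis by (intro LIMSEQ_le_const2) auto
qed

lemma proj_rec:
  assumes "\<omega> \<in> seqs m" "l \<in> S"
  shows "proj f a l \<omega> = f (\<omega> 0) l (proj f a l (shf \<omega>))"
proof -
  let ?z = "\<bar>proj f a l \<omega> - f (\<omega> 0) l (proj f a l (shf \<omega>))\<bar>"
  have b: "?z \<le> 2 * (b - a) * \<gamma>2 ^ n" for n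
  proof -
    have 1: "\<bar>proj f a l \<omega> - f (\<omega> 0) l (fcomp f l (pref (shf \<omega>) n) a)\<bar> \<le> \<gamma>2 ^ Suc n * (b - a)"
      using proj_approx[OF assms, of "Suc n"] by (simp add: pref_Suc)
    have 2: "\<bar>f (\<omega> 0) l (fcomp f l (pref (shf \<omega>) n) a) - f (\<omega> 0) l (proj f a l (shf \<omega>))\<bar>
        \<le> \<gamma>2 * \<bar>fcomp f l (pref (shf \<omega>) n) a - proj f a l (shf \<omega>)\<bar>"
      using f_lip_x[OF seqs_0[OF assms(1)] assms(2)] fc_X[OF seqs_pref[OF seqs_shf[OF assms(1)]] assms(2)]
        proj_X[OF seqs_shf[OF assms(1)] assms(2)] ab by auto
    have 3: "\<gamma>2 * \<bar>fcomp f l (pref (shf \<omega>) n) a - proj f a l (shf \<omega>)\<bar> \<le> \<gamma>2 * (\<gamma>2 ^ n * (b - a))"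
      using proj_approx[OF seqs_shf[OF assms(1)] assms(2), of n] gm by (intro mult_left_mono) auto
    have 4: "\<gamma>2 ^ Suc n * (b - a) \<le> \<gamma>2 ^ n * (b - a)"
      using gm ab by (intro mult_right_mono) (auto simp: power_decreasing)
    show ?thesis using 1 2 3 4 by (simp add: algebra_simps)
  qed
  have "(\<lambda>n. 2 * (b - a) * \<gamma>2 ^ n) \<longlonglongrightarrow> 2 * (b - a) * 0"
    using gm by (intro tendsto_intros) auto
  then have "(\<lambda>n. 2 * (b - a) * \<gamma>2 ^ n) \<longlonglongrightarrow> 0" by simp
  then have "?z \<le> 0" using b by (intro LIMSEQ_le_const[of _ 0]) auto
  then show ?thesis by simp
qed

lemma proj_pref:
  assumes "\<omega> \<in> seqs m" "l \<in> S"
  shows "proj f a l \<omega> = fcomp f l (pref \<omega> k) (proj f a l (shn k \<omega>))"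
  using assms(1)
proof (induction k arbitrary: \<omega>)
  case (Suc k)
  then show ?case using proj_rec[OF Suc.prems assms(2)] Suc.IH[OF seqs_shf[OF Suc.prems]]
    by (simp add: pref_Suc shn_Suc)
qed simp

end

context ifs begin

definition "LL = M / (1 - \<gamma>2)"
definition G :: "'a \<Rightarrow> (nat \<Rightarrow> nat) \<Rightarrow> 'a" where
  "G l = Gs shf (\<lambda>\<omega>. fl (\<omega> 0) l (proj f a l (shf \<omega>))) (\<lambda>\<omega>. fx (\<omega> 0) l (proj f a l (shf \<omega>)))"

lemma LL_pos: "0 < LL" using Mp gm by (simp add: LL_def)

lemma G_props:
  assumes "\<omega> \<in> seqs m" "l \<in> S"
  shows "G l \<omega> = fl (\<omega> 0) l (proj f a l (shf \<omega>)) + fx (\<omega> 0) l (proj f a l (shf \<omega>)) *\<^sub>R G l (shf \<omega>)"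
    and "norm (G l \<omega>) \<le> LL"
proof -
  have h: "norm (fl (\<omega> 0) l (proj f a l (shf \<omega>))) \<le> M \<and> \<bar>fx (\<omega> 0) l (proj f a l (shf \<omega>))\<bar> \<le> \<gamma>2"
    if "\<omega> \<in> seqs m" for \<omega>
    using bnd[OF seqs_0[OF that] assms(2) proj_X[OF seqs_shf[OF that] assms(2)]]
      bfx[OF seqs_0[OF that] assms(2) proj_X[OF seqs_shf[OF that] assms(2)]] by auto
  note gp = Gs_props[of "seqs m" shf "\<lambda>\<omega>. fl (\<omega> 0) l (proj f a l (shf \<omega>))" M
      "\<lambda>\<omega>. fx (\<omega> 0) l (proj f a l (shf \<omega>))" \<gamma>2 \<omega>]
  show "G l \<omega> = fl (\<omega> 0) l (proj f a l (shf \<omega>)) + fx (\<omega> 0) l (proj f a l (shf \<omega>)) *\<^sub>R G l (shf \<omega>)"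
    unfolding G_def using gp(1) h seqs_shf assms gm by auto
  show "norm (G l \<omega>) \<le> LL"
    unfolding G_def LL_def using gp(2) h seqs_shf assms gm by auto
qed

lemma proj_lip_l:
  assumes "\<omega> \<in> seqs m" "l \<in> S" "\<mu> \<in> S"
  shows "\<bar>proj f a \<mu> \<omega> - proj f a l \<omega>\<bar> \<le> LL * norm (\<mu> - l)"
proof -
  have "\<bar>proj f a \<mu> \<omega> - proj f a l \<omega>\<bar> \<le> M * norm (\<mu> - l) / (1 - \<gamma>2)"
  proof (rule contract_bound[of "seqs m" shf "\<lambda>\<omega>. \<bar>proj f a \<mu> \<omega> - proj f a l \<omega>\<bar>" "b - a"])
    fix \<omega> assume w: "\<omega> \<in> seqs m"
    show "\<bar>proj f a \<mu> \<omega> - proj f a l \<omega>\<bar> \<le> b - a" using proj_X[OF w assms(2)] proj_X[OF w assms(3)] by auto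
    let ?y = "proj f a l (shf \<omega>)" and ?y' = "proj f a \<mu> (shf \<omega>)"
    have yX: "?y \<in> {a..b}" "?y' \<in> {a..b}" using proj_X[OF seqs_shf[OF w]] assms by auto
    have "proj f a \<mu> \<omega> - proj f a l \<omega> = (f (\<omega> 0) \<mu> ?y' - f (\<omega> 0) l ?y') + (f (\<omega> 0) l ?y' - f (\<omega> 0) l ?y)"
      using proj_rec[OF w assms(2)] proj_rec[OF w assms(3)] by simp
    moreover have "\<bar>f (\<omega> 0) \<mu> ?y' - f (\<omega> 0) l ?y'\<bar> \<le> M * norm (\<mu> - l)"
      using f_lip_l[OF seqs_0[OF w] assms(3,2) yX(2)] .
    moreover have "\<bar>f (\<omega> 0) l ?y' - f (\<omega> 0) l ?y\<bar> \<le> \<gamma>2 * \<bar>?y' - ?y\<bar>"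
      using f_lip_x[OF seqs_0[OF w] assms(2) yX(2,1)] .
    ultimately show "\<bar>proj f a \<mu> \<omega> - proj f a l \<omega>\<bar> \<le> M * norm (\<mu> - l) + \<gamma>2 * \<bar>?y' - ?y\<bar>"
      by linarith
  qed (use assms gm Mp seqs_shf in auto)
  then show ?thesis by (simp add: LL_def)
qed

definition "CR = M * (1 + LL + LL^2) / (1 - \<gamma>2)"

lemma le_powr: "0 \<le> x \<Longrightarrow> x \<le> 1 \<Longrightarrow> x \<le> x powr \<delta>"
  using powr_mono'[of \<delta> 1 x] dl by (cases "x = 0") auto

lemma proj_rem:
  assumes "\<omega> \<in> seqs m" "l \<in> S" "\<mu> \<in> S"
  shows "\<bar>proj f a \<mu> \<omega> - proj f a l \<omega> - G l \<omega> \<bullet> (\<mu> - l)\<bar> \<le> CR * (norm (\<mu> - l) powr \<delta> * norm (\<mu> - l))"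
proof -
  let ?n = "norm (\<mu> - l)"
  have n1: "?n \<le> 1" using dS assms by auto
  have np: "?n \<le> ?n powr \<delta>" using le_powr n1 by auto
  let ?A = "M * (1 + LL + LL^2) * (?n powr \<delta> * ?n)"
  have "\<bar>proj f a \<mu> \<omega> - proj f a l \<omega> - G l \<omega> \<bullet> (\<mu> - l)\<bar> \<le> ?A / (1 - \<gamma>2)"
  proof (rule contract_bound[of "seqs m" shf "\<lambda>\<omega>. \<bar>proj f a \<mu> \<omega> - proj f a l \<omega> - G l \<omega> \<bullet> (\<mu> - l)\<bar>" "b - a + LL * ?n"])
    fix \<omega> assume w: "\<omega> \<in> seqs m"
    have "\<bar>G l \<omega> \<bullet> (\<mu> - l)\<bar> \<le> LL * ?n"
      using Cauchy_Schwarz_ineq2[of "G l \<omega>" "\<mu> - l"] G_props(2)[OF w assms(2)]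
      by (meson mult_right_mono norm_ge_zero order_trans)
    then show "\<bar>proj f a \<mu> \<omega> - proj f a l \<omega> - G l \<omega> \<bullet> (\<mu> - l)\<bar> \<le> b - a + LL * ?n"
      using proj_X[OF w assms(2)] proj_X[OF w assms(3)] by auto
    let ?y = "proj f a l (shf \<omega>)" and ?y' = "proj f a \<mu> (shf \<omega>)" and ?j = "\<omega> 0"
    have yX: "?y \<in> {a..b}" "?y' \<in> {a..b}" using proj_X[OF seqs_shf[OF w]] assms by auto
    have dy: "\<bar>?y' - ?y\<bar> \<le> LL * ?n" using proj_lip_l[OF seqs_shf[OF w] assms(2,3)] .
    have eq: "proj f a \<mu> \<omega> - proj f a l \<omega> - G l \<omega> \<bullet> (\<mu> - l)
       = (f ?j \<mu> ?y' - f ?j l ?y - fl ?j l ?y \<bullet> (\<mu> - l) - fx ?j l ?y * (?y' - ?y))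
         + fx ?j l ?y * (?y' - ?y - G l (shf \<omega>) \<bullet> (\<mu> - l))"
      using proj_rec[OF w assms(2)] proj_rec[OF w assms(3)] G_props(1)[OF w assms(2)]
      by (simp add: inner_add_left algebra_simps)
    have t: "\<bar>f ?j \<mu> ?y' - f ?j l ?y - fl ?j l ?y \<bullet> (\<mu> - l) - fx ?j l ?y * (?y' - ?y)\<bar>
        \<le> M * (?n powr \<delta> * ?n + \<bar>?y' - ?y\<bar> * ?n + (?y' - ?y)^2)"
      using taylor[OF seqs_0[OF w] assms(2,3) yX(1,2)] .
    have "\<bar>?y' - ?y\<bar> * ?n \<le> LL * (?n powr \<delta> * ?n)"
    proof -
      have "\<bar>?y' - ?y\<bar> * ?n \<le> (LL * ?n) * ?n" using dy by (simp add: mult_right_mono)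
      also have "\<dots> \<le> LL * (?n powr \<delta> * ?n)" using np LL_pos by (simp add: mult_left_mono mult_right_mono)
      finally show ?thesis .
    qed
    moreover have "(?y' - ?y)^2 \<le> LL^2 * (?n powr \<delta> * ?n)"
    proof -
      have "(?y' - ?y)^2 = \<bar>?y' - ?y\<bar> * \<bar>?y' - ?y\<bar>" by (simp add: power2_eq_square)
      also have "\<dots> \<le> (LL * ?n) * (LL * ?n)" using dy by (intro mult_mono) auto
      also have "\<dots> = LL^2 * (?n * ?n)" by (simp add: power2_eq_square)
      also have "\<dots> \<le> LL^2 * (?n powr \<delta> * ?n)" using np by (intro mult_left_mono mult_right_mono) auto
      finally show ?thesis .
    qed
    ultimately have "?n powr \<delta> * ?n + \<bar>?y' - ?y\<bar> * ?n + (?y' - ?y)^2 \<le> (1 + LL + LL^2) * (?n powr \<delta> * ?n)"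
      by (simp add: distrib_right)
    then have "M * (?n powr \<delta> * ?n + \<bar>?y' - ?y\<bar> * ?n + (?y' - ?y)^2) \<le> M * ((1 + LL + LL^2) * (?n powr \<delta> * ?n))"
      using Mp by (intro mult_left_mono) auto
    then have t2: "\<bar>f ?j \<mu> ?y' - f ?j l ?y - fl ?j l ?y \<bullet> (\<mu> - l) - fx ?j l ?y * (?y' - ?y)\<bar> \<le> ?A"
      using t by (simp add: mult.assoc)
    have "\<bar>fx ?j l ?y * (?y' - ?y - G l (shf \<omega>) \<bullet> (\<mu> - l))\<bar> \<le> \<gamma>2 * \<bar>?y' - ?y - G l (shf \<omega>) \<bullet> (\<mu> - l)\<bar>"
      using bfx[OF seqs_0[OF w] assms(2) yX(1)] by (simp add: abs_mult mult_right_mono)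
    then show "\<bar>proj f a \<mu> \<omega> - proj f a l \<omega> - G l \<omega> \<bullet> (\<mu> - l)\<bar>
        \<le> ?A + \<gamma>2 * \<bar>proj f a \<mu> (shf \<omega>) - proj f a l (shf \<omega>) - G l (shf \<omega>) \<bullet> (\<mu> - l)\<bar>"
      unfolding eq using t2 by linarith
  qed (use assms gm Mp LL_pos seqs_shf in auto)
  then show ?thesis by (simp add: CR_def)
qed

lemma CR_pos: "0 < CR" using Mp gm LL_pos by (simp add: CR_def add_pos_nonneg)

lemma proj_deriv:
  assumes "\<omega> \<in> seqs m" "l \<in> S"
  shows "((\<lambda>\<mu>. proj f a \<mu> \<omega>) has_derivative (\<lambda>h. G l \<omega> \<bullet> h)) (at l within S)"
  unfolding has_derivative_within_alt
proof (intro conjI allI impI)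
  show "bounded_linear (\<lambda>h. G l \<omega> \<bullet> h)" by (rule bounded_linear_inner_right)
  fix e :: real assume e: "0 < e"
  define d where "d = (e / CR) powr (1 / \<delta>)"
  have d: "0 < d" using e CR_pos by (simp add: d_def)
  have dd: "d powr \<delta> = e / CR" using e CR_pos dl by (simp add: d_def powr_powr)
  show "\<exists>d>0. \<forall>y\<in>S. norm (y - l) < d \<longrightarrow>
      norm (proj f a y \<omega> - proj f a l \<omega> - G l \<omega> \<bullet> (y - l)) \<le> e * norm (y - l)"
  proof (intro exI[of _ d] conjI ballI impI d)
    fix y assume y: "y \<in> S" "norm (y - l) < d"
    have "norm (proj f a y \<omega> - proj f a l \<omega> - G l \<omega> \<bullet> (y - l)) \<le> CR * (norm (y - l) powr \<delta> * norm (y - l))"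
      using proj_rem[OF assms y(1)] by simp
    also have "\<dots> \<le> CR * (d powr \<delta> * norm (y - l))"
      using y dl CR_pos by (intro mult_left_mono mult_right_mono powr_mono2) auto
    also have "\<dots> = e * norm (y - l)" using dd CR_pos by simp
    finally show "norm (proj f a y \<omega> - proj f a l \<omega> - G l \<omega> \<bullet> (y - l)) \<le> e * norm (y - l)" .
  qed
qed

lemma norm4: "norm (x1 + x2 + x3 + x4) \<le> norm x1 + norm x2 + norm x3 + (norm x4::real)"
  for x1 :: "'b::real_normed_vector"
proof -
  have "norm (x1 + x2 + x3 + x4) \<le> norm (x1 + x2 + x3) + norm x4" by (rule norm_triangle_ineq)
  moreover have "norm (x1 + x2 + x3) \<le> norm (x1 + x2) + norm x3" by (rule norm_triangle_ineq)
  moreover have "norm (x1 + x2) \<le> norm x1 + norm x2" by (rule norm_triangle_ineq)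
  ultimately show ?thesis by linarith
qed

definition "CH = M * (1 + LL) * (1 + LL) / (1 - \<gamma>2)"

lemma G_hold:
  assumes "\<omega> \<in> seqs m" "l \<in> S" "\<mu> \<in> S"
  shows "norm (G \<mu> \<omega> - G l \<omega>) \<le> CH * norm (\<mu> - l) powr \<delta>"
proof -
  let ?n = "norm (\<mu> - l)" let ?p = "?n powr \<delta>"
  have n1: "?n \<le> 1" using dS assms by auto
  have np: "?n \<le> ?p" using le_powr n1 by auto
  let ?A = "M * (1 + LL) * (1 + LL) * ?p"
  have A0: "0 \<le> ?A" using Mp LL_pos by simp
  have "norm (G \<mu> \<omega> - G l \<omega>) \<le> ?A / (1 - \<gamma>2)"
  proof (rule contract_bound[of "seqs m" shf "\<lambda>\<omega>. norm (G \<mu> \<omega> - G l \<omega>)" "2 * LL"])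
    fix \<omega> assume w: "\<omega> \<in> seqs m"
    show "norm (G \<mu> \<omega> - G l \<omega>) \<le> 2 * LL"
      using G_props(2)[OF w assms(2)] G_props(2)[OF w assms(3)] norm_triangle_ineq4[of "G \<mu> \<omega>" "G l \<omega>"] by auto
    let ?y = "proj f a l (shf \<omega>)" and ?y' = "proj f a \<mu> (shf \<omega>)" and ?j = "\<omega> 0"
    have yX: "?y \<in> {a..b}" "?y' \<in> {a..b}" using proj_X[OF seqs_shf[OF w]] assms by auto
    have dy: "\<bar>?y' - ?y\<bar> \<le> LL * ?p"
      using proj_lip_l[OF seqs_shf[OF w] assms(2,3)] mult_left_mono[OF np less_imp_le[OF LL_pos]] by linarith
    have j: "?j \<in> {1..m}" using seqs_0[OF w] .
    have eq: "G \<mu> \<omega> - G l \<omega> = (fl ?j \<mu> ?y' - fl ?j l ?y') + (fl ?j l ?y' - fl ?j l ?y)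
       + (fx ?j \<mu> ?y' - fx ?j l ?y) *\<^sub>R G \<mu> (shf \<omega>) + fx ?j l ?y *\<^sub>R (G \<mu> (shf \<omega>) - G l (shf \<omega>))"
      using G_props(1)[OF w assms(2)] G_props(1)[OF w assms(3)] by (simp add: algebra_simps)
    have 1: "norm (fl ?j \<mu> ?y' - fl ?j l ?y') \<le> M * ?p" using hfl[OF j assms(3,2) yX(2)] .
    have 2: "norm (fl ?j l ?y' - fl ?j l ?y) \<le> M * (LL * ?p)"
      using fl_lip[OF j assms(2) yX(2,1)] mult_left_mono[OF dy less_imp_le[OF Mp]] by linarith
    have 3: "\<bar>fx ?j \<mu> ?y' - fx ?j l ?y\<bar> \<le> M * ?p + M * (LL * ?p)"
    proof -
      have "\<bar>fx ?j \<mu> ?y' - fx ?j l ?y\<bar> \<le> \<bar>fx ?j \<mu> ?y' - fx ?j l ?y'\<bar> + \<bar>fx ?j l ?y' - fx ?j l ?y\<bar>" by arith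
      then show ?thesis
        using hfx[OF j assms(3,2) yX(2)] fx_lip[OF j assms(2) yX(2,1)] mult_left_mono[OF dy less_imp_le[OF Mp]]
        by linarith
    qed
    have h3b: "norm ((fx ?j \<mu> ?y' - fx ?j l ?y) *\<^sub>R G \<mu> (shf \<omega>)) \<le> (M * ?p + M * (LL * ?p)) * LL"
      using 3 G_props(2)[OF seqs_shf[OF w] assms(3)] by (simp add: mult_mono)
    have 4: "norm (fx ?j l ?y *\<^sub>R (G \<mu> (shf \<omega>) - G l (shf \<omega>))) \<le> \<gamma>2 * norm (G \<mu> (shf \<omega>) - G l (shf \<omega>))"
      using bfx[OF j assms(2) yX(1)] by (simp add: mult_right_mono)
    have sumeq: "M * ?p + M * (LL * ?p) + (M * ?p + M * (LL * ?p)) * LL = ?A" by (simp add: algebra_simps)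
    show "norm (G \<mu> \<omega> - G l \<omega>) \<le> ?A + \<gamma>2 * norm (G \<mu> (shf \<omega>) - G l (shf \<omega>))"
      unfolding eq using 1 2 h3b 4 sumeq norm4[of "fl ?j \<mu> ?y' - fl ?j l ?y'" "fl ?j l ?y' - fl ?j l ?y"
        "(fx ?j \<mu> ?y' - fx ?j l ?y) *\<^sub>R G \<mu> (shf \<omega>)" "fx ?j l ?y *\<^sub>R (G \<mu> (shf \<omega>) - G l (shf \<omega>))"]
      by linarith
  qed (use assms gm A0 seqs_shf in auto)
  then show ?thesis by (simp add: CH_def)
qed

end

context ifs begin

definition "K0 = M / \<gamma>1"

lemma K0_pos: "0 < K0" using Mp gm by (simp add: K0_def)

lemma M_le_K0: "j\<in>{1..m} \<Longrightarrow> l\<in>S \<Longrightarrow> x\<in>{a..b} \<Longrightarrow> M \<le> K0 * \<bar>fx j l x\<bar>"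
  using bfx[of j l x] gm Mp unfolding K0_def
  by (simp add: field_simps)

lemma fx_at:
  assumes "j\<in>{1..m}" "l\<in>S" "a < z" "z < b"
  shows "(f j l has_real_derivative fx j l z) (at z)"
proof -
  have i: "z \<in> interior {a..b}" using assms by auto
  have "(f j l has_real_derivative fx j l z) (at z within {a..b})" using dx[OF assms(1,2), of z] assms by auto
  then show ?thesis unfolding at_within_interior[OF i] .
qed

lemma step_low:
  assumes j: "j\<in>{1..m}" and l: "l\<in>S" and uv: "u\<in>{a..b}" "v\<in>{a..b}"
  shows "\<bar>fx j l u\<bar> * \<bar>u - v\<bar> \<le> (1 + K0 * \<bar>u - v\<bar>) * \<bar>f j l u - f j l v\<bar>"
proof -
  have "\<exists>\<xi>\<in>{a..b}. \<bar>f j l u - f j l v\<bar> = \<bar>fx j l \<xi>\<bar> * \<bar>u - v\<bar> \<and> \<bar>\<xi> - u\<bar> \<le> \<bar>u - v\<bar>"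
  proof (cases "u = v")
    case True then show ?thesis using uv by auto
  next
    case False
    define p where "p = min u v" define q where "q = max u v"
    have pq: "p < q" "a \<le> p" "q \<le> b" using False uv by (auto simp: p_def q_def)
    have cont: "continuous_on {p..q} (f j l)"
      by (rule DERIV_continuous_on[of _ _ "fx j l"])
         (use pq in \<open>auto intro: has_field_derivative_subset[OF dx[OF j l]]\<close>)
    obtain d z where z: "p < z" "z < q" "DERIV (f j l) z :> d" "f j l q - f j l p = (q - p) * d"
    proof -
      have "f j l differentiable (at x)" if "p < x" "x < q" for x
        using fx_at[OF j l, of x] that pq unfolding real_differentiable_def by auto
      then show ?thesis using MVT[OF pq(1) cont] that by blast
    qed
    have "d = fx j l z" using DERIV_unique[OF z(3) fx_at[OF j l]] z pq by auto
    then have e1: "\<bar>f j l q - f j l p\<bar> = \<bar>fx j l z\<bar> * (q - p)"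
      using z(4) pq by (simp add: abs_mult)
    have e2: "\<bar>f j l u - f j l v\<bar> = \<bar>f j l q - f j l p\<bar>" "\<bar>u - v\<bar> = q - p"
      by (auto simp: p_def q_def min_def max_def abs_minus_commute)
    have "\<bar>f j l u - f j l v\<bar> = \<bar>fx j l z\<bar> * \<bar>u - v\<bar>" using e1 e2 by simp
    moreover have "\<bar>z - u\<bar> \<le> \<bar>u - v\<bar>" using z by (auto simp: p_def q_def)
    moreover have "z \<in> {a..b}" using z pq by auto
    ultimately show ?thesis by blast
  qed
  then obtain \<xi> where xi: "\<xi>\<in>{a..b}" "\<bar>f j l u - f j l v\<bar> = \<bar>fx j l \<xi>\<bar> * \<bar>u - v\<bar>" "\<bar>\<xi> - u\<bar> \<le> \<bar>u - v\<bar>"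
    by blast
  have "\<bar>fx j l u\<bar> \<le> \<bar>fx j l \<xi>\<bar> + M * \<bar>\<xi> - u\<bar>"
    using fx_lip[OF j l xi(1) uv(1)] by linarith
  also have "\<dots> \<le> \<bar>fx j l \<xi>\<bar> + K0 * \<bar>fx j l \<xi>\<bar> * \<bar>u - v\<bar>"
    using M_le_K0[OF j l xi(1)] xi(3) Mp
    by (intro add_left_mono mult_mono) (auto simp: K0_pos less_imp_le)
  finally have "\<bar>fx j l u\<bar> \<le> \<bar>fx j l \<xi>\<bar> * (1 + K0 * \<bar>u - v\<bar>)" by (simp add: algebra_simps)
  then have "\<bar>fx j l u\<bar> * \<bar>u - v\<bar> \<le> \<bar>fx j l \<xi>\<bar> * (1 + K0 * \<bar>u - v\<bar>) * \<bar>u - v\<bar>"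
    by (rule mult_right_mono) simp
  then show ?thesis using xi(2) by (simp add: algebra_simps)
qed

lemma step_up:
  assumes j: "j\<in>{1..m}" and l: "l\<in>S" and uv: "u\<in>{a..b}" "v\<in>{a..b}"
  shows "\<bar>f j l u - f j l v\<bar> \<le> \<bar>fx j l v\<bar> * (1 + K0 * \<bar>u - v\<bar>) * \<bar>u - v\<bar>"
proof -
  have t: "\<bar>f j l u - f j l v - fx j l v * (u - v)\<bar> \<le> M * (u - v)^2" using taylor_x[OF j l uv(2,1)] .
  have "M * (u - v)^2 \<le> K0 * \<bar>fx j l v\<bar> * \<bar>u - v\<bar> * \<bar>u - v\<bar>"
  proof -
    have "M * (u - v)^2 = M * (\<bar>u - v\<bar> * \<bar>u - v\<bar>)" by (simp add: power2_eq_square abs_mult_self)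
    also have "\<dots> \<le> (K0 * \<bar>fx j l v\<bar>) * (\<bar>u - v\<bar> * \<bar>u - v\<bar>)"
      using M_le_K0[OF j l uv(2)] by (rule mult_right_mono) simp
    finally show ?thesis by (simp add: mult.assoc)
  qed
  then have "\<bar>f j l u - f j l v\<bar> \<le> \<bar>fx j l v\<bar> * \<bar>u - v\<bar> + K0 * \<bar>fx j l v\<bar> * \<bar>u - v\<bar> * \<bar>u - v\<bar>"
  proof -
    have "\<bar>f j l u - f j l v\<bar> \<le> \<bar>f j l u - f j l v - fx j l v * (u - v)\<bar> + \<bar>fx j l v * (u - v)\<bar>"
      using abs_triangle_ineq[of "f j l u - f j l v - fx j l v * (u - v)" "fx j l v * (u - v)"] by simp
    moreover have "\<bar>fx j l v * (u - v)\<bar> = \<bar>fx j l v\<bar> * \<bar>u - v\<bar>" by (simp add: abs_mult)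
    ultimately show ?thesis using t \<open>M * (u - v)^2 \<le> _\<close> by linarith
  qed
  then show ?thesis by (simp add: algebra_simps)
qed

lemma fx_dist:
  assumes j: "j\<in>{1..m}" and l: "l\<in>S" and uv: "u\<in>{a..b}" "v\<in>{a..b}"
  shows "\<bar>fx j l u\<bar> \<le> \<bar>fx j l v\<bar> * (1 + K0 * \<bar>u - v\<bar>)"
proof -
  have "\<bar>fx j l u\<bar> \<le> \<bar>fx j l v\<bar> + M * \<bar>u - v\<bar>" using fx_lip[OF j l uv] by linarith
  also have "\<dots> \<le> \<bar>fx j l v\<bar> + K0 * \<bar>fx j l v\<bar> * \<bar>u - v\<bar>"
    using M_le_K0[OF j l uv(2)] by (intro add_left_mono mult_right_mono) auto
  finally show ?thesis by (simp add: algebra_simps)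
qed

end

context ifs begin

primrec Bw :: "nat list \<Rightarrow> 'a \<Rightarrow> real \<Rightarrow> real" where
  "Bw [] l x = 1"
| "Bw (j # w) l x = fx j l (fcomp f l w x) * Bw w l x"

primrec Aw :: "nat list \<Rightarrow> 'a \<Rightarrow> real \<Rightarrow> 'a" where
  "Aw [] l x = 0"
| "Aw (j # w) l x = fl j l (fcomp f l w x) + fx j l (fcomp f l w x) *\<^sub>R Aw w l x"

definition "PD n = (\<Prod>i<n. 1 + K0 * \<gamma>2^i * (b - a))"
definition "KD = exp (K0 * (b - a) / (1 - \<gamma>2))"
definition "SG n = (\<Sum>i<n. \<gamma>2^i)"

lemma SG_Suc: "SG (Suc n) = SG n + \<gamma>2^n" by (simp add: SG_def)
lemma SG_le: "SG n \<le> 1 / (1 - \<gamma>2)"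
  using gm by (simp add: SG_def sum_gp_strict divide_right_mono)
lemma SG_nn: "0 \<le> SG n" using gm by (simp add: SG_def sum_nonneg)

lemma PD_0[simp]: "PD 0 = 1" by (simp add: PD_def)
lemma PD_Suc: "PD (Suc n) = PD n * (1 + K0 * \<gamma>2^n * (b - a))" by (simp add: PD_def)
lemma PD_ge1: "1 \<le> PD n"
  unfolding PD_def using K0_pos gm ab by (intro prod_ge_1) auto
lemma PD_le: "PD n \<le> KD"
proof -
  have "PD n \<le> (\<Prod>i<n. exp (K0 * \<gamma>2^i * (b - a)))"
    unfolding PD_def using K0_pos gm ab
    by (intro prod_mono) (auto simp: exp_ge_add_one_self add_nonneg_nonneg)
  also have "\<dots> = exp (\<Sum>i<n. K0 * \<gamma>2^i * (b - a))" by (simp add: exp_sum)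
  also have "(\<Sum>i<n. K0 * \<gamma>2^i * (b - a)) = K0 * (b - a) * SG n"
    unfolding SG_def sum_distrib_left by (intro sum.cong) auto
  also have "\<dots> \<le> K0 * (b - a) * (1 / (1 - \<gamma>2))"
    using K0_pos ab SG_le by (intro mult_left_mono) auto
  finally show ?thesis by (simp add: KD_def)
qed
lemma KD_ge1: "1 \<le> KD" using PD_ge1 PD_le order_trans by blast

lemma UV:
  assumes "set w \<subseteq> {1..m}" "l\<in>S" "x\<in>{a..b}" "y\<in>{a..b}"
  shows "\<bar>fcomp f l w x - fcomp f l w y\<bar> \<le> \<gamma>2 ^ length w * (b - a)"
    and "1 + K0 * \<bar>fcomp f l w x - fcomp f l w y\<bar> \<le> 1 + K0 * \<gamma>2 ^ length w * (b - a)"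
proof -
  have "\<bar>fcomp f l w x - fcomp f l w y\<bar> \<le> \<gamma>2 ^ length w * \<bar>x - y\<bar>" using fc_lip assms by blast
  also have "\<dots> \<le> \<gamma>2 ^ length w * (b - a)" using assms gm by (intro mult_left_mono) auto
  finally show 1: "\<bar>fcomp f l w x - fcomp f l w y\<bar> \<le> \<gamma>2 ^ length w * (b - a)" .
  show "1 + K0 * \<bar>fcomp f l w x - fcomp f l w y\<bar> \<le> 1 + K0 * \<gamma>2 ^ length w * (b - a)"
    using mult_left_mono[OF 1 less_imp_le[OF K0_pos]] by (simp add: mult.assoc)
qed

lemma Bw_bnd:
  assumes "set w \<subseteq> {1..m}" "l\<in>S" "x\<in>{a..b}"
  shows "\<gamma>1 ^ length w \<le> \<bar>Bw w l x\<bar> \<and> \<bar>Bw w l x\<bar> \<le> \<gamma>2 ^ length w"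
  using assms
proof (induction w)
  case (Cons j w)
  have j: "j \<in> {1..m}" and w: "set w \<subseteq> {1..m}" using Cons by auto
  have U: "fcomp f l w x \<in> {a..b}" using fc_X w Cons by auto
  have b1: "\<gamma>1 \<le> \<bar>fx j l (fcomp f l w x)\<bar>" "\<bar>fx j l (fcomp f l w x)\<bar> \<le> \<gamma>2" using bfx[OF j Cons(3) U] by auto
  have ih: "\<gamma>1 ^ length w \<le> \<bar>Bw w l x\<bar>" "\<bar>Bw w l x\<bar> \<le> \<gamma>2 ^ length w" using Cons w by auto
  show ?case using mult_mono[OF b1(1) ih(1)] mult_mono[OF b1(2) ih(2)] gm by (simp add: abs_mult)
qed simp

lemma Bw_ne: "set w \<subseteq> {1..m} \<Longrightarrow> l\<in>S \<Longrightarrow> x\<in>{a..b} \<Longrightarrow> 0 < \<bar>Bw w l x\<bar>"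
  using Bw_bnd[of w l x] gm by (meson less_le_trans zero_less_power)

lemma Bw_dist:
  assumes "set w \<subseteq> {1..m}" "l\<in>S" "x\<in>{a..b}" "y\<in>{a..b}"
  shows "\<bar>Bw w l x\<bar> \<le> PD (length w) * \<bar>Bw w l y\<bar>"
  using assms
proof (induction w)
  case Nil then show ?case by simp
next
  case (Cons j w)
  have j: "j \<in> {1..m}" and w: "set w \<subseteq> {1..m}" using Cons by auto
  let ?U = "fcomp f l w x" and ?V = "fcomp f l w y" and ?n = "length w"
  have UV1: "?U \<in> {a..b}" "?V \<in> {a..b}" using fc_X w Cons by auto
  have "\<bar>fx j l ?U\<bar> \<le> \<bar>fx j l ?V\<bar> * (1 + K0 * \<gamma>2 ^ ?n * (b - a))"
    using fx_dist[OF j Cons(3) UV1] UV(2)[OF w Cons(3-5)] mult_left_mono[of _ _ "\<bar>fx j l ?V\<bar>"]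
    by (meson abs_ge_zero order_trans)
  moreover have "\<bar>Bw w l x\<bar> \<le> PD ?n * \<bar>Bw w l y\<bar>" using Cons w by auto
  ultimately have "\<bar>fx j l ?U\<bar> * \<bar>Bw w l x\<bar> \<le> (\<bar>fx j l ?V\<bar> * (1 + K0 * \<gamma>2 ^ ?n * (b - a))) * (PD ?n * \<bar>Bw w l y\<bar>)"
    by (intro mult_mono) auto
  then show ?case by (simp add: abs_mult PD_Suc algebra_simps)
qed

lemma fc_upper:
  assumes "set w \<subseteq> {1..m}" "l\<in>S" "x\<in>{a..b}" "y\<in>{a..b}"
  shows "\<bar>fcomp f l w x - fcomp f l w y\<bar> \<le> PD (length w) * \<bar>Bw w l y\<bar> * \<bar>x - y\<bar>"
  using assms
proof (induction w)
  case Nil then show ?case by simp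
next
  case (Cons j w)
  have j: "j \<in> {1..m}" and w: "set w \<subseteq> {1..m}" using Cons by auto
  let ?U = "fcomp f l w x" and ?V = "fcomp f l w y" and ?n = "length w"
  have UV1: "?U \<in> {a..b}" "?V \<in> {a..b}" using fc_X w Cons by auto
  have "\<bar>f j l ?U - f j l ?V\<bar> \<le> \<bar>fx j l ?V\<bar> * (1 + K0 * \<bar>?U - ?V\<bar>) * \<bar>?U - ?V\<bar>"
    using step_up[OF j Cons(3) UV1] .
  also have "\<dots> \<le> (\<bar>fx j l ?V\<bar> * (1 + K0 * \<gamma>2 ^ ?n * (b - a))) * (PD ?n * \<bar>Bw w l y\<bar> * \<bar>x - y\<bar>)"
    using UV(2)[OF w Cons(3-5)] Cons w K0_pos gm ab
    by (intro mult_mono mult_left_mono) (auto intro!: add_nonneg_nonneg mult_nonneg_nonneg)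
  finally show ?case by (simp add: abs_mult PD_Suc algebra_simps)
qed

lemma fc_lower:
  assumes "set w \<subseteq> {1..m}" "l\<in>S" "x\<in>{a..b}" "y\<in>{a..b}"
  shows "\<bar>Bw w l x\<bar> * \<bar>x - y\<bar> \<le> PD (length w) * \<bar>fcomp f l w x - fcomp f l w y\<bar>"
  using assms
proof (induction w)
  case Nil then show ?case by simp
next
  case (Cons j w)
  have j: "j \<in> {1..m}" and w: "set w \<subseteq> {1..m}" using Cons by auto
  let ?U = "fcomp f l w x" and ?V = "fcomp f l w y" and ?n = "length w"
  have UV1: "?U \<in> {a..b}" "?V \<in> {a..b}" using fc_X w Cons by auto
  have "\<bar>Bw (j # w) l x\<bar> * \<bar>x - y\<bar> = \<bar>fx j l ?U\<bar> * (\<bar>Bw w l x\<bar> * \<bar>x - y\<bar>)" by (simp add: abs_mult)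
  also have "\<dots> \<le> \<bar>fx j l ?U\<bar> * (PD ?n * \<bar>?U - ?V\<bar>)" using Cons w by (intro mult_left_mono) auto
  also have "\<dots> = PD ?n * (\<bar>fx j l ?U\<bar> * \<bar>?U - ?V\<bar>)" by simp
  also have "\<dots> \<le> PD ?n * ((1 + K0 * \<bar>?U - ?V\<bar>) * \<bar>f j l ?U - f j l ?V\<bar>)"
    using step_low[OF j Cons(3) UV1] PD_ge1 by (intro mult_left_mono) (auto intro: order_trans[OF zero_le_one])
  also have "\<dots> \<le> PD ?n * ((1 + K0 * \<gamma>2 ^ ?n * (b - a)) * \<bar>f j l ?U - f j l ?V\<bar>)"
    using UV(2)[OF w Cons(3-5)] PD_ge1 by (intro mult_left_mono mult_right_mono) (auto intro: order_trans[OF zero_le_one])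
  finally show ?case by (simp add: PD_Suc algebra_simps)
qed

end

context ifs begin

lemma SG_Suc2: "SG (Suc n) = 1 + \<gamma>2 * SG n"
  by (simp add: SG_def sum.lessThan_Suc_shift sum_distrib_left del: sum.lessThan_Suc)

lemma Bw_lip:
  assumes "set w \<subseteq> {1..m}" "l\<in>S" "x\<in>{a..b}" "y\<in>{a..b}"
  shows "\<bar>Bw w l x - Bw w l y\<bar> \<le> K0 * KD * SG (length w) * \<bar>Bw w l y\<bar> * \<bar>x - y\<bar>"
  using assms
proof (induction w)
  case Nil then show ?case by (simp add: SG_def)
next
  case (Cons j w)
  have j: "j \<in> {1..m}" and w: "set w \<subseteq> {1..m}" using Cons by auto
  let ?U = "fcomp f l w x" and ?V = "fcomp f l w y" and ?n = "length w"
  let ?X = "\<bar>x - y\<bar>" and ?By = "\<bar>Bw w l y\<bar>" and ?FV = "\<bar>fx j l ?V\<bar>"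
  have UV1: "?U \<in> {a..b}" "?V \<in> {a..b}" using fc_X w Cons by auto
  have eq: "Bw (j#w) l x - Bw (j#w) l y = (fx j l ?U - fx j l ?V) * Bw w l x + fx j l ?V * (Bw w l x - Bw w l y)"
    by (simp add: algebra_simps)
  have a1: "\<bar>fx j l ?U - fx j l ?V\<bar> \<le> M * (\<gamma>2 ^ ?n * ?X)"
    using fx_lip[OF j Cons(3) UV1] fc_lip[OF w Cons(3-5)] Mp
    by (meson less_imp_le mult_left_mono order_trans)
  have a2: "\<bar>Bw w l x\<bar> \<le> KD * ?By"
    using Bw_dist[OF w Cons(3-5)] PD_le mult_right_mono[of _ KD ?By] by (meson abs_ge_zero order_trans)
  have "\<bar>(fx j l ?U - fx j l ?V) * Bw w l x\<bar> \<le> (M * (\<gamma>2 ^ ?n * ?X)) * (KD * ?By)"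
    unfolding abs_mult using a1 a2 by (intro mult_mono) auto
  also have "\<dots> \<le> (K0 * ?FV * (\<gamma>2 ^ ?n * ?X)) * (KD * ?By)"
    using M_le_K0[OF j Cons(3) UV1(2)] gm KD_ge1 by (intro mult_right_mono) auto
  finally have t1: "\<bar>(fx j l ?U - fx j l ?V) * Bw w l x\<bar> \<le> K0 * KD * \<gamma>2 ^ ?n * (?FV * ?By) * ?X"
    by (simp add: algebra_simps)
  have "\<bar>fx j l ?V * (Bw w l x - Bw w l y)\<bar> \<le> ?FV * (K0 * KD * SG ?n * ?By * ?X)"
    unfolding abs_mult using Cons w by (intro mult_left_mono) auto
  then have t2: "\<bar>fx j l ?V * (Bw w l x - Bw w l y)\<bar> \<le> K0 * KD * SG ?n * (?FV * ?By) * ?X"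
    by (simp add: algebra_simps)
  have "\<bar>Bw (j#w) l x - Bw (j#w) l y\<bar> \<le> K0 * KD * \<gamma>2 ^ ?n * (?FV * ?By) * ?X + K0 * KD * SG ?n * (?FV * ?By) * ?X"
    unfolding eq using t1 t2 abs_triangle_ineq[of "(fx j l ?U - fx j l ?V) * Bw w l x" "fx j l ?V * (Bw w l x - Bw w l y)"]
    by linarith
  also have "\<dots> = K0 * KD * SG (length (j#w)) * \<bar>Bw (j#w) l y\<bar> * ?X"
    by (simp add: SG_Suc abs_mult algebra_simps)
  finally show ?case .
qed

lemma Aw_bd:
  assumes "set w \<subseteq> {1..m}" "l\<in>S" "x\<in>{a..b}"
  shows "norm (Aw w l x) \<le> LL"
proof -
  have "norm (Aw w l x) \<le> M * SG (length w)"
    using assms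
  proof (induction w)
    case Nil then show ?case by (simp add: SG_def)
  next
    case (Cons j w)
    have j: "j \<in> {1..m}" and w: "set w \<subseteq> {1..m}" using Cons by auto
    have U: "fcomp f l w x \<in> {a..b}" using fc_X w Cons by auto
    have "norm (Aw (j#w) l x) \<le> norm (fl j l (fcomp f l w x)) + \<bar>fx j l (fcomp f l w x)\<bar> * norm (Aw w l x)"
      using norm_triangle_ineq[of "fl j l (fcomp f l w x)" "fx j l (fcomp f l w x) *\<^sub>R Aw w l x"] by simp
    also have "\<dots> \<le> M + \<gamma>2 * (M * SG (length w))"
      using bnd[OF j Cons(3) U] bfx[OF j Cons(3) U] Cons w by (intro add_mono mult_mono) auto
    finally show ?case by (simp add: SG_Suc2 algebra_simps)
  qed
  also have "\<dots> \<le> M * (1 / (1 - \<gamma>2))" using SG_le Mp by (intro mult_left_mono) auto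
  finally show ?thesis by (simp add: LL_def)
qed

definition "C2 = K0 * KD * (1 + LL)"

lemma Aw_lip:
  assumes "set w \<subseteq> {1..m}" "l\<in>S" "x\<in>{a..b}" "y\<in>{a..b}"
  shows "norm (Aw w l x - Aw w l y) \<le> C2 * length w * \<bar>Bw w l y\<bar> * \<bar>x - y\<bar>"
  using assms
proof (induction w)
  case Nil then show ?case by simp
next
  case (Cons j w)
  have j: "j \<in> {1..m}" and w: "set w \<subseteq> {1..m}" using Cons by auto
  let ?U = "fcomp f l w x" and ?V = "fcomp f l w y" and ?n = "length w"
  let ?X = "\<bar>x - y\<bar>" and ?By = "\<bar>Bw w l y\<bar>" and ?FV = "\<bar>fx j l ?V\<bar>"
  have UV1: "?U \<in> {a..b}" "?V \<in> {a..b}" using fc_X w Cons by auto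
  have eq: "Aw (j#w) l x - Aw (j#w) l y = (fl j l ?U - fl j l ?V) + (fx j l ?U - fx j l ?V) *\<^sub>R Aw w l x
      + fx j l ?V *\<^sub>R (Aw w l x - Aw w l y)"
    by (simp add: algebra_simps)
  have uv: "\<bar>?U - ?V\<bar> \<le> KD * ?By * ?X"
  proof -
    have "PD ?n * (?By * ?X) \<le> KD * (?By * ?X)" by (rule mult_right_mono[OF PD_le]) simp
    then show ?thesis using fc_upper[OF w Cons(3-5)] by (simp add: mult.assoc)
  qed
  have MK: "M * (KD * ?By * ?X) * (1 + LL) \<le> C2 * (?FV * ?By) * ?X"
  proof -
    have "M * (KD * ?By * ?X) * (1 + LL) \<le> (K0 * ?FV) * (KD * ?By * ?X) * (1 + LL)"
      using M_le_K0[OF j Cons(3) UV1(2)] LL_pos KD_ge1 by (intro mult_right_mono) auto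
    then show ?thesis by (simp add: C2_def algebra_simps)
  qed
  have t1: "norm (fl j l ?U - fl j l ?V) \<le> M * (KD * ?By * ?X)"
    using fl_lip[OF j Cons(3) UV1] uv Mp by (meson less_imp_le mult_left_mono order_trans)
  have t2: "norm ((fx j l ?U - fx j l ?V) *\<^sub>R Aw w l x) \<le> (M * (KD * ?By * ?X)) * LL"
  proof -
    have "\<bar>fx j l ?U - fx j l ?V\<bar> \<le> M * (KD * ?By * ?X)"
      using fx_lip[OF j Cons(3) UV1] uv Mp by (meson less_imp_le mult_left_mono order_trans)
    then show ?thesis using Aw_bd[OF w Cons(3,4)] by (simp add: mult_mono)
  qed
  have t3: "norm (fx j l ?V *\<^sub>R (Aw w l x - Aw w l y)) \<le> C2 * ?n * (?FV * ?By) * ?X"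
  proof -
    have "norm (fx j l ?V *\<^sub>R (Aw w l x - Aw w l y)) \<le> ?FV * (C2 * ?n * ?By * ?X)"
      using Cons w by (simp add: mult_left_mono)
    then show ?thesis by (simp add: algebra_simps)
  qed
  have "norm (Aw (j#w) l x - Aw (j#w) l y) \<le> M * (KD * ?By * ?X) + (M * (KD * ?By * ?X)) * LL + C2 * ?n * (?FV * ?By) * ?X"
    unfolding eq using t1 t2 t3 norm_triangle_ineq[of "(fl j l ?U - fl j l ?V) + (fx j l ?U - fx j l ?V) *\<^sub>R Aw w l x"
      "fx j l ?V *\<^sub>R (Aw w l x - Aw w l y)"]
      norm_triangle_ineq[of "fl j l ?U - fl j l ?V" "(fx j l ?U - fx j l ?V) *\<^sub>R Aw w l x"] by linarith
  also have "\<dots> = M * (KD * ?By * ?X) * (1 + LL) + C2 * ?n * (?FV * ?By) * ?X" by (simp add: algebra_simps)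
  also have "\<dots> \<le> C2 * (?FV * ?By) * ?X + C2 * ?n * (?FV * ?By) * ?X" using MK by linarith
  also have "\<dots> = C2 * length (j#w) * \<bar>Bw (j#w) l y\<bar> * ?X" by (simp add: abs_mult algebra_simps)
  finally show ?case .
qed

lemma fc_lam:
  assumes "set w \<subseteq> {1..m}" "l\<in>S" "\<mu>\<in>S" "x\<in>{a..b}"
  shows "\<bar>fcomp f \<mu> w x - fcomp f l w x\<bar> \<le> LL * norm (\<mu> - l)"
proof -
  have "\<bar>fcomp f \<mu> w x - fcomp f l w x\<bar> \<le> M * norm (\<mu> - l) * SG (length w)"
    using assms
  proof (induction w)
    case Nil then show ?case by (simp add: SG_def)
  next
    case (Cons j w)
    have j: "j \<in> {1..m}" and w: "set w \<subseteq> {1..m}" using Cons by auto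
    let ?U = "fcomp f l w x" and ?U' = "fcomp f \<mu> w x"
    have U: "?U \<in> {a..b}" "?U' \<in> {a..b}" using fc_X w Cons by auto
    have "\<bar>f j \<mu> ?U' - f j l ?U\<bar> \<le> \<bar>f j \<mu> ?U' - f j l ?U'\<bar> + \<bar>f j l ?U' - f j l ?U\<bar>" by arith
    also have "\<dots> \<le> M * norm (\<mu> - l) + \<gamma>2 * (M * norm (\<mu> - l) * SG (length w))"
      using f_lip_l[OF j Cons(4,3) U(2)] f_lip_x[OF j Cons(3) U(2,1)] Cons w gm
      by (smt (verit, best) mult_left_mono)
    finally show ?case by (simp add: SG_Suc2 algebra_simps)
  qed
  also have "\<dots> \<le> M * norm (\<mu> - l) * (1 / (1 - \<gamma>2))" using SG_le Mp by (intro mult_left_mono) auto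
  finally show ?thesis by (simp add: LL_def)
qed

lemma Bw_lam:
  assumes "set w \<subseteq> {1..m}" "l\<in>S" "\<mu>\<in>S" "x\<in>{a..b}"
  shows "\<bar>Bw w l x\<bar> \<le> (1 + K0 * (norm (\<mu> - l) powr \<delta> + LL * norm (\<mu> - l))) ^ length w * \<bar>Bw w \<mu> x\<bar>"
  using assms
proof (induction w)
  case Nil then show ?case by simp
next
  case (Cons j w)
  have j: "j \<in> {1..m}" and w: "set w \<subseteq> {1..m}" using Cons by auto
  let ?U = "fcomp f l w x" and ?U' = "fcomp f \<mu> w x" and ?t = "norm (\<mu> - l) powr \<delta> + LL * norm (\<mu> - l)"
  have U: "?U \<in> {a..b}" "?U' \<in> {a..b}" using fc_X w Cons by auto
  have t0: "0 \<le> ?t" using LL_pos by simp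
  have h1: "\<bar>fx j l ?U - fx j \<mu> ?U\<bar> \<le> M * norm (\<mu> - l) powr \<delta>"
    using hfx[OF j Cons(3,4) U(1)] by (simp add: norm_minus_commute)
  have h2: "\<bar>fx j \<mu> ?U - fx j \<mu> ?U'\<bar> \<le> M * (LL * norm (\<mu> - l))"
  proof -
    have "\<bar>?U - ?U'\<bar> \<le> LL * norm (\<mu> - l)" using fc_lam[OF w Cons(3,4,5)] by (simp add: abs_minus_commute)
    then have "M * \<bar>?U - ?U'\<bar> \<le> M * (LL * norm (\<mu> - l))" using Mp by (intro mult_left_mono) auto
    then show ?thesis using fx_lip[OF j Cons(4) U] by linarith
  qed
  have "\<bar>fx j l ?U\<bar> \<le> \<bar>fx j \<mu> ?U'\<bar> + M * ?t" using h1 h2 by (simp add: algebra_simps)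
  also have "\<dots> \<le> \<bar>fx j \<mu> ?U'\<bar> + K0 * \<bar>fx j \<mu> ?U'\<bar> * ?t"
    using M_le_K0[OF j Cons(4) U(2)] t0 by (intro add_left_mono mult_right_mono) auto
  finally have s: "\<bar>fx j l ?U\<bar> \<le> (1 + K0 * ?t) * \<bar>fx j \<mu> ?U'\<bar>" by (simp add: algebra_simps)
  have ih: "\<bar>Bw w l x\<bar> \<le> (1 + K0 * ?t) ^ length w * \<bar>Bw w \<mu> x\<bar>" using Cons w by auto
  have "\<bar>fx j l ?U\<bar> * \<bar>Bw w l x\<bar> \<le> ((1 + K0 * ?t) * \<bar>fx j \<mu> ?U'\<bar>) * ((1 + K0 * ?t) ^ length w * \<bar>Bw w \<mu> x\<bar>)"
    using s ih by (intro mult_mono) auto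
  then show ?case by (simp add: abs_mult algebra_simps)
qed

lemma G_pref:
  assumes "\<omega> \<in> seqs m" "l \<in> S"
  shows "G l \<omega> = Aw (pref \<omega> k) l (proj f a l (shn k \<omega>)) + Bw (pref \<omega> k) l (proj f a l (shn k \<omega>)) *\<^sub>R G l (shn k \<omega>)"
  using assms(1)
proof (induction k arbitrary: \<omega>)
  case 0 then show ?case by simp
next
  case (Suc k)
  let ?x = "proj f a l (shn k (shf \<omega>))" and ?w = "pref (shf \<omega>) k"
  have p: "proj f a l (shf \<omega>) = fcomp f l ?w ?x" using proj_pref[OF seqs_shf[OF Suc.prems] assms(2)] .
  have "G l \<omega> = fl (\<omega> 0) l (proj f a l (shf \<omega>)) + fx (\<omega> 0) l (proj f a l (shf \<omega>)) *\<^sub>R G l (shf \<omega>)"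
    using G_props(1)[OF Suc.prems assms(2)] .
  also have "G l (shf \<omega>) = Aw ?w l ?x + Bw ?w l ?x *\<^sub>R G l (shn k (shf \<omega>))"
    using Suc.IH[OF seqs_shf[OF Suc.prems]] .
  finally show ?case unfolding p by (simp add: pref_Suc shn_Suc algebra_simps)
qed

end

lemma common_facts:
  assumes "\<omega> \<noteq> \<tau>"
  defines "k \<equiv> LEAST n. \<omega> n \<noteq> \<tau> n"
  shows "shn k \<omega> 0 \<noteq> shn k \<tau> 0" "pref \<omega> k = pref \<tau> k" "common \<omega> \<tau> = pref \<omega> k"
proof -
  have ex: "\<exists>n. \<omega> n \<noteq> \<tau> n" using assms(1) by auto
  show "shn k \<omega> 0 \<noteq> shn k \<tau> 0" unfolding shn_def k_def using LeastI_ex[OF ex] by simp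
  have "\<omega> i = \<tau> i" if "i < k" for i using not_less_Least[of i "\<lambda>n. \<omega> n \<noteq> \<tau> n"] that k_def by auto
  then show "pref \<omega> k = pref \<tau> k" unfolding pref_def by auto
  show "common \<omega> \<tau> = pref \<omega> k" unfolding common_def k_def ..
qed

context ifs begin

lemma dsym_facts:
  assumes "\<omega> \<noteq> \<tau>" "set w \<subseteq> {1..m}" "common \<omega> \<tau> = w" "l0 \<in> S" "y \<in> {a..b}"
  shows "dsym f {a..b} l0 \<omega> \<tau> \<le> KD * KD * (b - a) * \<bar>Bw w l0 y\<bar>"
    "dsym f {a..b} l0 \<omega> \<tau> \<le> \<gamma>2 ^ length w * (b - a)"
    "0 \<le> dsym f {a..b} l0 \<omega> \<tau>"
proof -
  have d: "dsym f {a..b} l0 \<omega> \<tau> = diameter (fcomp f l0 w ` {a..b})"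
    using assms by (simp add: dsym_def)
  have bd: "bounded (fcomp f l0 w ` {a..b})"
    by (rule bounded_subset[OF bounded_closed_interval[of a b]]) (use fc_X assms in auto)
  show "0 \<le> dsym f {a..b} l0 \<omega> \<tau>" unfolding d by (rule diameter_ge_0[OF bd])
  show "dsym f {a..b} l0 \<omega> \<tau> \<le> KD * KD * (b - a) * \<bar>Bw w l0 y\<bar>"
    unfolding d
  proof (rule diameter_le)
    fix s t assume "s \<in> fcomp f l0 w ` {a..b}" "t \<in> fcomp f l0 w ` {a..b}"
    then obtain u v where uv: "u \<in> {a..b}" "v \<in> {a..b}" "s = fcomp f l0 w u" "t = fcomp f l0 w v" by auto
    have "\<bar>s - t\<bar> \<le> PD (length w) * \<bar>Bw w l0 v\<bar> * \<bar>u - v\<bar>" using fc_upper[OF assms(2,4) uv(1,2)] uv by simp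
    also have "\<dots> \<le> KD * (KD * \<bar>Bw w l0 y\<bar>) * (b - a)"
    proof (intro mult_mono)
      show "PD (length w) \<le> KD" by (rule PD_le)
      show "\<bar>Bw w l0 v\<bar> \<le> KD * \<bar>Bw w l0 y\<bar>"
        using Bw_dist[OF assms(2,4) uv(2) assms(5)] PD_le[of "length w"] mult_right_mono[of _ KD "\<bar>Bw w l0 y\<bar>"]
        by (meson abs_ge_zero order_trans)
      show "\<bar>u - v\<bar> \<le> b - a" using uv by auto
    qed (use KD_ge1 in auto)
    finally show "norm (s - t) \<le> KD * KD * (b - a) * \<bar>Bw w l0 y\<bar>" by (simp add: algebra_simps)
  qed (use ab in simp)
  show "dsym f {a..b} l0 \<omega> \<tau> \<le> \<gamma>2 ^ length w * (b - a)"
    unfolding d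
  proof (rule diameter_le)
    fix s t assume "s \<in> fcomp f l0 w ` {a..b}" "t \<in> fcomp f l0 w ` {a..b}"
    then obtain u v where uv: "u \<in> {a..b}" "v \<in> {a..b}" "s = fcomp f l0 w u" "t = fcomp f l0 w v" by auto
    show "norm (s - t) \<le> \<gamma>2 ^ length w * (b - a)" using UV(1)[OF assms(2,4) uv(1,2)] uv by simp
  qed (use ab in simp)
qed

end

lemma kq_bound:
  fixes q :: real assumes "0 \<le> q" "q < 1"
  shows "real k * q ^ k \<le> 1 / (1 - q)"
proof -
  have "real k * q ^ k = (\<Sum>i<k. q ^ k)" by simp
  also have "\<dots> \<le> (\<Sum>i<k. q ^ i)" using assms by (intro sum_mono power_decreasing) auto
  also have "\<dots> \<le> 1 / (1 - q)" using assms by (simp add: sum_gp_strict divide_right_mono)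
  finally show ?thesis .
qed

lemma pow_powr: "0 < g \<Longrightarrow> (g powr p) ^ k = (g ^ k) powr p" for g :: real
proof -
  assume g: "0 < g"
  have "(g powr p) ^ k = (g powr p) powr real k" using g by (simp add: powr_realpow)
  also have "\<dots> = g powr (p * real k)" by (simp add: powr_powr)
  also have "\<dots> = (g powr real k) powr p" by (simp add: powr_powr mult.commute)
  also have "\<dots> = (g ^ k) powr p" using g by (simp add: powr_realpow)
  finally show ?thesis .
qed


context ifs begin

lemma line_deriv:
  assumes "\<omega> \<in> seqs m" "\<tau> \<in> seqs m" "l0 + p + t *\<^sub>R e \<in> interior S"
  shows "((\<lambda>s. proj f a (l0 + p + s *\<^sub>R e) \<omega> - proj f a (l0 + p + s *\<^sub>R e) \<tau>) has_real_derivative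
     ((G (l0 + p + t *\<^sub>R e) \<omega> - G (l0 + p + t *\<^sub>R e) \<tau>) \<bullet> e)) (at t)"
proof -
  let ?L = "l0 + p + t *\<^sub>R e"
  have L: "?L \<in> S" using assms(3) interior_subset by blast
  have d1: "((\<lambda>\<mu>. proj f a \<mu> \<omega> - proj f a \<mu> \<tau>) has_derivative (\<lambda>h. G ?L \<omega> \<bullet> h - G ?L \<tau> \<bullet> h)) (at ?L)"
    using has_derivative_diff[OF proj_deriv[OF assms(1) L] proj_deriv[OF assms(2) L]]
    unfolding at_within_interior[OF assms(3)] .
  have d2: "((\<lambda>s. l0 + p + s *\<^sub>R e) has_derivative (\<lambda>h. h *\<^sub>R e)) (at t)"
    by (auto intro!: derivative_eq_intros)
  have "(((\<lambda>\<mu>. proj f a \<mu> \<omega> - proj f a \<mu> \<tau>) \<circ> (\<lambda>s. l0 + p + s *\<^sub>R e)) has_derivative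
      ((\<lambda>h. G ?L \<omega> \<bullet> h - G ?L \<tau> \<bullet> h) \<circ> (\<lambda>h. h *\<^sub>R e))) (at t)"
    by (rule diff_chain_at[OF d2]) (use d1 in simp)
  note cmp = this
  then have "((\<lambda>s. proj f a (l0 + p + s *\<^sub>R e) \<omega> - proj f a (l0 + p + s *\<^sub>R e) \<tau>) has_derivative
      (\<lambda>h. ((G ?L \<omega> - G ?L \<tau>) \<bullet> e) * h)) (at t)"
  proof -
    have e: "((\<lambda>h. G ?L \<omega> \<bullet> h - G ?L \<tau> \<bullet> h) \<circ> (\<lambda>h. h *\<^sub>R e)) = (\<lambda>h. ((G ?L \<omega> - G ?L \<tau>) \<bullet> e) * h)"
      by (auto simp: inner_diff_left algebra_simps fun_eq_iff)
    show ?thesis using has_derivative_eq_rhs[OF cmp e] by (simp add: o_def)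
  qed
  then show ?thesis unfolding has_field_derivative_def
    by (rule has_derivative_eq_rhs) (auto simp: fun_eq_iff)
qed

end

context ifs begin

lemma final:
  fixes l0 :: 'a and r \<eta> \<beta> :: real
  assumes r: "0 < r" "ball l0 r \<subseteq> S" and eta: "0 < \<eta>" and beta: "0 < \<beta>"
    and MTc: "\<And>l \<omega> \<tau>. l \<in> S \<Longrightarrow> \<omega> \<in> seqs m \<Longrightarrow> \<tau> \<in> seqs m \<Longrightarrow> \<omega> 0 \<noteq> \<tau> 0 \<Longrightarrow>
        \<bar>proj f a l \<omega> - proj f a l \<tau>\<bar> < \<eta> \<Longrightarrow>
        \<exists>g. ((\<lambda>\<mu>. proj f a \<mu> \<omega> - proj f a \<mu> \<tau>) has_derivative (\<lambda>h. g \<bullet> h)) (at l within S) \<and> \<eta> \<le> norm g"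
  shows "\<exists>c>0. \<exists>\<epsilon>0>0. \<epsilon>0 \<le> r \<and>
    (\<forall>\<omega>\<in>seqs m. \<forall>\<tau>\<in>seqs m. \<exists>e. norm e = 1 \<and>
      (\<forall>p t. p \<in> ball 0 \<epsilon>0 \<and> p \<bullet> e = 0 \<and> p + t *\<^sub>R e \<in> ball 0 \<epsilon>0 \<longrightarrow>
         \<bar>proj f a (l0 + p + t *\<^sub>R e) \<omega> - proj f a (l0 + p + t *\<^sub>R e) \<tau>\<bar>
            < c * dsym f {a..b} l0 \<omega> \<tau> powr (1 + \<beta>) \<longrightarrow>
         (\<exists>g. ((\<lambda>s. proj f a (l0 + p + s *\<^sub>R e) \<omega> - proj f a (l0 + p + s *\<^sub>R e) \<tau>)
                  has_real_derivative g) (at t)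
              \<and> c * dsym f {a..b} l0 \<omega> \<tau> powr (1 + \<beta>) \<le> \<bar>g\<bar>)))"
proof -
  have l0S: "l0 \<in> S" using r by auto
  define pp where "pp = \<beta> / 2"
  have pp: "0 < pp" using beta by (simp add: pp_def)
  define q where "q = \<gamma>2 powr pp"
  have q: "0 < q" "q < 1" using gm pp powr01_less_one[of \<gamma>2 pp] by (auto simp: q_def)
  define ba where "ba = (b - a) powr pp"
  have ba: "0 < ba" using ab by (simp add: ba_def)
  define Q where "Q = KD * KD * (b - a) * ba"
  have Q: "0 < Q" using KD_ge1 ab ba by (simp add: Q_def)
  define C3 where "C3 = K0 * KD * LL / (1 - \<gamma>2)"
  have C3: "0 \<le> C3" using K0_pos KD_ge1 LL_pos gm by (simp add: C3_def)
  have C2: "0 \<le> C2" using K0_pos KD_ge1 LL_pos by (simp add: C2_def)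
  define E0 where "E0 = (C2 / (1 - q) + C3 + 1) * KD * Q * ba"
  have E0: "0 < E0" using C2 C3 q KD_ge1 Q ba unfolding E0_def
    by (intro mult_pos_pos add_nonneg_pos) auto
  define c where "c = min (\<eta> / (4 * E0)) (\<eta> / (2 * Q * ba))"
  have c: "0 < c" using eta E0 Q ba by (simp add: c_def)
  have cE: "c * E0 \<le> \<eta> / 4"
  proof -
    have "c \<le> \<eta> / (4 * E0)" by (simp add: c_def)
    then show ?thesis using E0 by (simp add: field_simps)
  qed
  have cb: "c * ba \<le> \<eta> / (2 * Q)"
  proof -
    have "c \<le> \<eta> / (2 * Q * ba)" by (simp add: c_def)
    then show ?thesis using Q ba by (simp add: field_simps)
  qed
  define s where "s = 1 / q - 1"
  have s: "0 < s" "(1 + s) * q = 1" using q by (auto simp: s_def field_simps)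
  have CH: "0 < CH" using Mp LL_pos gm by (simp add: CH_def)
  define e1 where "e1 = (\<eta> / (8 * CH)) powr (1 / \<delta>) / 2"
  have e1: "0 < e1" "(2 * e1) powr \<delta> = \<eta> / (8 * CH)" using eta CH dl by (auto simp: e1_def powr_powr)
  define e2 where "e2 = (s / (2 * K0)) powr (1 / \<delta>)"
  have e2: "0 < e2" "e2 powr \<delta> = s / (2 * K0)" using s K0_pos dl by (auto simp: e2_def powr_powr)
  define e3 where "e3 = s / (2 * K0 * LL)"
  have e3: "0 < e3" "LL * e3 = s / (2 * K0)" using s K0_pos LL_pos by (auto simp: e3_def field_simps)
  define \<epsilon>0 where "\<epsilon>0 = min r (min e1 (min e2 e3))"
  have \<epsilon>0: "0 < \<epsilon>0" "\<epsilon>0 \<le> r" "\<epsilon>0 \<le> e1" "\<epsilon>0 \<le> e2" "\<epsilon>0 \<le> e3"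
    using r e1 e2 e3 by (auto simp: \<epsilon>0_def)
  have inS: "z \<in> S" if "z \<in> ball l0 \<epsilon>0" for z using that \<epsilon>0 r by auto
  have inI: "z \<in> interior S" if "z \<in> ball l0 \<epsilon>0" for z
  proof -
    have "ball l0 r \<subseteq> interior S" using r by (intro interior_maximal) auto
    then show ?thesis using that \<epsilon>0 by auto
  qed
  have F1: "CH * norm (z - z') powr \<delta> \<le> \<eta> / 8" if "z \<in> ball l0 \<epsilon>0" "z' \<in> ball l0 \<epsilon>0" for z z'
  proof -
    have "norm (z - z') \<le> dist z l0 + dist l0 z'" using dist_triangle[of z z' l0] by (simp add: dist_norm)
    also have "\<dots> \<le> 2 * e1" using that \<epsilon>0 by (auto simp: dist_commute)
    finally have "norm (z - z') powr \<delta> \<le> (2 * e1) powr \<delta>" using dl by (intro powr_mono2) auto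
    then have "CH * norm (z - z') powr \<delta> \<le> CH * (\<eta> / (8 * CH))" using e1 CH by (intro mult_left_mono) auto
    then show ?thesis using CH by simp
  qed
  have F2: "(1 + K0 * (norm (z - l0) powr \<delta> + LL * norm (z - l0))) * q \<le> 1" if "z \<in> ball l0 \<epsilon>0" for z
  proof -
    have n: "norm (z - l0) \<le> \<epsilon>0" using that by (simp add: dist_norm norm_minus_commute)
    have "norm (z - l0) powr \<delta> \<le> e2 powr \<delta>" using n \<epsilon>0 dl by (intro powr_mono2) auto
    moreover have "LL * norm (z - l0) \<le> LL * e3" using n \<epsilon>0 LL_pos by (intro mult_left_mono) auto
    ultimately have "norm (z - l0) powr \<delta> + LL * norm (z - l0) \<le> s / K0" using e2 e3 by simp
    then have "K0 * (norm (z - l0) powr \<delta> + LL * norm (z - l0)) \<le> K0 * (s / K0)" using K0_pos by (intro mult_left_mono) auto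
    then have "K0 * (norm (z - l0) powr \<delta> + LL * norm (z - l0)) \<le> s" using K0_pos by simp
    then have "(1 + K0 * (norm (z - l0) powr \<delta> + LL * norm (z - l0))) * q \<le> (1 + s) * q"
      using q by (intro mult_right_mono) auto
    then show ?thesis using s by simp
  qed
  obtain e0 :: 'a where e0: "norm e0 = 1" using norm_Basis nonempty_Basis by blast
  have ballmem: "l0 + p + t *\<^sub>R e \<in> ball l0 \<epsilon>0" if "p + t *\<^sub>R e \<in> ball 0 \<epsilon>0" for p t and e :: 'a
    using that by (simp add: dist_norm add.assoc)
  have main: "\<exists>e. norm e = 1 \<and>
      (\<forall>p t. p \<in> ball 0 \<epsilon>0 \<and> p \<bullet> e = 0 \<and> p + t *\<^sub>R e \<in> ball 0 \<epsilon>0 \<longrightarrow>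
         \<bar>proj f a (l0 + p + t *\<^sub>R e) \<omega> - proj f a (l0 + p + t *\<^sub>R e) \<tau>\<bar>
            < c * dsym f {a..b} l0 \<omega> \<tau> powr (1 + \<beta>) \<longrightarrow>
         (\<exists>g. ((\<lambda>s. proj f a (l0 + p + s *\<^sub>R e) \<omega> - proj f a (l0 + p + s *\<^sub>R e) \<tau>)
                  has_real_derivative g) (at t)
              \<and> c * dsym f {a..b} l0 \<omega> \<tau> powr (1 + \<beta>) \<le> \<bar>g\<bar>))"
    if \<omega>: "\<omega> \<in> seqs m" and \<tau>: "\<tau> \<in> seqs m" for \<omega> \<tau>
    proof (cases "\<omega> = \<tau>")
      case True
      then show ?thesis by (intro exI[of _ e0]) (simp add: e0 dsym_def)
    next
      case False
      define k where "k = (LEAST n. \<omega> n \<noteq> \<tau> n)"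
      note cf = common_facts[OF False, folded k_def]
      define w where "w = pref \<omega> k"
      have w: "set w \<subseteq> {1..m}" using seqs_pref[OF \<omega>] by (simp add: w_def)
      have lw: "length w = k" by (simp add: w_def)
      define \<omega>' where "\<omega>' = shn k \<omega>"
      define \<tau>' where "\<tau>' = shn k \<tau>"
      have \<omega>': "\<omega>' \<in> seqs m" and \<tau>': "\<tau>' \<in> seqs m" using seqs_shn \<omega> \<tau> by (auto simp: \<omega>'_def \<tau>'_def)
      have d0': "\<omega>' 0 \<noteq> \<tau>' 0" using cf(1) by (simp add: \<omega>'_def \<tau>'_def)
      define d where "d = dsym f {a..b} l0 \<omega> \<tau>"
      have dcom: "common \<omega> \<tau> = w" using cf(3) by (simp add: w_def)
      have aX: "a \<in> {a..b}" using ab by auto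
      have d0: "0 \<le> d" and dgk: "d \<le> \<gamma>2 ^ k * (b - a)"
        using dsym_facts[OF False w dcom l0S aX] lw by (auto simp: d_def)
      have dB: "d \<le> KD * KD * (b - a) * \<bar>Bw w l0 y\<bar>" if "y \<in> {a..b}" for y
        using dsym_facts(1)[OF False w dcom l0S that] by (auto simp: d_def)
      define x1 where "x1 = (\<lambda>z. proj f a z \<omega>')"
      define x2 where "x2 = (\<lambda>z. proj f a z \<tau>')"
      define H where "H = (\<lambda>z. G z \<omega>' - G z \<tau>')"
      define D where "D = (\<lambda>z. proj f a z \<omega> - proj f a z \<tau>)"
      have xX: "x1 z \<in> {a..b}" "x2 z \<in> {a..b}" if "z \<in> S" for z
        using proj_X \<omega>' \<tau>' that by (auto simp: x1_def x2_def)
      have Deq: "D z = fcomp f z w (x1 z) - fcomp f z w (x2 z)" if "z \<in> S" for z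
        using proj_pref[OF \<omega> that, of k] proj_pref[OF \<tau> that, of k] cf(2)
        by (simp add: D_def x1_def x2_def w_def \<omega>'_def \<tau>'_def)
      have Geq: "G z \<omega> - G z \<tau> = (Aw w z (x1 z) - Aw w z (x2 z)) + Bw w z (x1 z) *\<^sub>R H z
          + (Bw w z (x1 z) - Bw w z (x2 z)) *\<^sub>R G z \<tau>'" if "z \<in> S" for z
        using G_pref[OF \<omega> that, of k] G_pref[OF \<tau> that, of k] cf(2)
        by (simp add: H_def x1_def x2_def w_def \<omega>'_def \<tau>'_def algebra_simps)
      define u where "u = d powr pp"
      have bad: "0 < d \<and> (C2 * k + C3 + 1) * \<bar>x1 z - x2 z\<bar> \<le> \<eta> / 4 \<and> d * u \<le> Q * \<bar>Bw w z (x1 z)\<bar>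
          \<and> u \<le> ba \<and> c * d powr (1 + \<beta>) \<le> c * d * u * ba"
        if z: "z \<in> ball l0 \<epsilon>0" and hyp: "\<bar>D z\<bar> < c * d powr (1 + \<beta>)" for z
      proof -
        have zS: "z \<in> S" using inS[OF z] .
        note X = xX[OF zS]
        have dpos: "0 < d"
        proof (rule ccontr)
          assume "\<not> 0 < d" then have "d = 0" using d0 by auto
          then show False using hyp by simp
        qed
        have upos: "0 < u" using dpos by (simp add: u_def)
        have dpow: "d powr (1 + \<beta>) = d * u * u"
        proof -
          have "1 + \<beta> = (1 + pp) + pp" by (simp add: pp_def)
          then have "d powr (1 + \<beta>) = d powr (1 + pp) * d powr pp" by (simp only: powr_add)
          also have "\<dots> = d powr 1 * d powr pp * d powr pp" by (simp only: powr_add)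
          finally have "d powr (1 + \<beta>) = d powr 1 * d powr pp * d powr pp" .
          then show ?thesis using dpos by (simp add: u_def)
        qed
        define B where "B = \<bar>Bw w z (x1 z)\<bar>"
        have B0: "0 < B" using Bw_ne[OF w zS X(1)] by (simp add: B_def)
        define \<theta> where "\<theta> = K0 * (norm (z - l0) powr \<delta> + LL * norm (z - l0))"
        have \<theta>0: "0 \<le> \<theta>" using K0_pos LL_pos by (simp add: \<theta>_def)
        have h3: "\<bar>Bw w l0 (x1 z)\<bar> \<le> (1 + \<theta>) ^ k * B"
          using Bw_lam[OF w l0S zS X(1)] lw by (simp add: \<theta>_def B_def)
        have h4: "(1 + \<theta>) ^ k * q ^ k \<le> 1"
        proof -
          have "(1 + \<theta>) ^ k * q ^ k = ((1 + \<theta>) * q) ^ k" by (simp add: power_mult_distrib)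
          also have "\<dots> \<le> 1" using F2[OF z] \<theta>0 q by (intro power_le_one) (auto simp: \<theta>_def)
          finally show ?thesis .
        qed
        have KK: "0 \<le> KD * KD * (b - a)" using KD_ge1 ab by simp
        have h5: "d * q ^ k \<le> KD * KD * (b - a) * B"
        proof -
          have "d * q ^ k \<le> (KD * KD * (b - a) * \<bar>Bw w l0 (x1 z)\<bar>) * q ^ k"
            using dB[OF X(1)] q by (intro mult_right_mono) auto
          also have "\<dots> \<le> (KD * KD * (b - a) * ((1 + \<theta>) ^ k * B)) * q ^ k"
            using h3 KK q by (intro mult_right_mono mult_left_mono) auto
          also have "\<dots> = KD * KD * (b - a) * B * ((1 + \<theta>) ^ k * q ^ k)" by (simp add: algebra_simps)
          also have "\<dots> \<le> KD * KD * (b - a) * B * 1" using h4 KK B0 by (intro mult_left_mono) auto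
          finally show ?thesis by simp
        qed
        have h6: "u \<le> q ^ k * ba"
        proof -
          have "u \<le> (\<gamma>2 ^ k * (b - a)) powr pp" unfolding u_def using dgk d0 pp by (intro powr_mono2) auto
          also have "\<dots> = (\<gamma>2 ^ k) powr pp * (b - a) powr pp" using gm ab by (simp add: powr_mult)
          also have "\<dots> = q ^ k * ba" using gm by (simp add: q_def ba_def pow_powr)
          finally show ?thesis .
        qed
        have qk1: "q ^ k \<le> 1" using q by (simp add: power_le_one)
        have "q ^ k * ba \<le> 1 * ba" by (rule mult_right_mono[OF qk1]) (use ba in simp)
        then have uba: "u \<le> ba" using h6 by simp
        have h7: "d * u \<le> Q * B"
        proof -
          have "d * u \<le> d * (q ^ k * ba)" using h6 d0 by (intro mult_left_mono)
          also have "\<dots> = (d * q ^ k) * ba" by simp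
          also have "\<dots> \<le> (KD * KD * (b - a) * B) * ba" using h5 ba by (intro mult_right_mono) auto
          finally show ?thesis by (simp add: Q_def algebra_simps)
        qed
        have h8: "B * \<bar>x1 z - x2 z\<bar> \<le> KD * \<bar>D z\<bar>"
        proof -
          have "B * \<bar>x1 z - x2 z\<bar> \<le> PD (length w) * \<bar>D z\<bar>"
            using fc_lower[OF w zS X] Deq[OF zS] by (simp add: B_def)
          also have "\<dots> \<le> KD * \<bar>D z\<bar>" by (intro mult_right_mono PD_le) auto
          finally show ?thesis .
        qed
        have h9: "\<bar>x1 z - x2 z\<bar> \<le> Q * KD * c * u"
        proof -
          have "d * u * \<bar>x1 z - x2 z\<bar> \<le> Q * B * \<bar>x1 z - x2 z\<bar>" by (intro mult_right_mono h7) auto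
          also have "\<dots> \<le> Q * (KD * \<bar>D z\<bar>)" using h8 Q by (simp add: mult.assoc mult_left_mono)
          also have "\<dots> \<le> Q * (KD * (c * (d * u * u)))"
            using hyp dpow Q KD_ge1 by (intro mult_left_mono) auto
          also have "\<dots> = (d * u) * (Q * KD * c * u)" by (simp add: algebra_simps)
          finally have "(d * u) * \<bar>x1 z - x2 z\<bar> \<le> (d * u) * (Q * KD * c * u)" by (simp add: algebra_simps)
          then show ?thesis using dpos upos by (simp add: mult_le_cancel_left_pos)
        qed
        have cf0: "0 \<le> C2 * real k + C3 + 1" using C2 C3 by simp
        have h11: "(C2 * k + C3 + 1) * \<bar>x1 z - x2 z\<bar> \<le> \<eta> / 4"
        proof -
          have "\<bar>x1 z - x2 z\<bar> \<le> Q * KD * c * (q ^ k * ba)"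
            using h9 h6 Q KD_ge1 c by (meson less_imp_le mult_left_mono order_trans zero_le_mult_iff zero_le_one)
          then have "(C2 * k + C3 + 1) * \<bar>x1 z - x2 z\<bar> \<le> (C2 * k + C3 + 1) * (Q * KD * c * (q ^ k * ba))"
            using cf0 by (intro mult_left_mono)
          also have "\<dots> = (C2 * (k * q ^ k) + (C3 + 1) * q ^ k) * (KD * Q * ba * c)" by (simp add: algebra_simps)
          also have "\<dots> \<le> (C2 * (1 / (1 - q)) + (C3 + 1) * 1) * (KD * Q * ba * c)"
          proof (intro mult_right_mono add_mono mult_left_mono)
            show "real k * q ^ k \<le> 1 / (1 - q)" using kq_bound[of q k] q by auto
            show "q ^ k \<le> 1" by (rule qk1)
            show "0 \<le> KD * Q * ba * c" using KD_ge1 Q ba c by simp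
          qed (use C2 C3 in auto)
          also have "\<dots> = c * E0" by (simp add: E0_def algebra_simps)
          finally show ?thesis using cE by linarith
        qed
        have last: "c * d powr (1 + \<beta>) \<le> c * d * u * ba"
        proof -
          have "c * d powr (1 + \<beta>) = (c * d * u) * u" by (simp add: dpow algebra_simps)
          also have "\<dots> \<le> (c * d * u) * ba" using uba c dpos upos by (intro mult_left_mono) auto
          finally show ?thesis .
        qed
        show ?thesis using dpos h11 h7 uba last by (simp add: B_def)
      qed
      show ?thesis
      proof (cases "\<exists>z\<in>ball l0 \<epsilon>0. \<bar>D z\<bar> < c * d powr (1 + \<beta>)")
        case False
        show ?thesis
        proof (intro exI[of _ e0] conjI e0 allI impI)
          fix p t assume pt: "p \<in> ball 0 \<epsilon>0 \<and> p \<bullet> e0 = 0 \<and> p + t *\<^sub>R e0 \<in> ball 0 \<epsilon>0"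
            and hyp: "\<bar>proj f a (l0 + p + t *\<^sub>R e0) \<omega> - proj f a (l0 + p + t *\<^sub>R e0) \<tau>\<bar>
              < c * dsym f {a..b} l0 \<omega> \<tau> powr (1 + \<beta>)"
          have "l0 + p + t *\<^sub>R e0 \<in> ball l0 \<epsilon>0" using ballmem pt by blast
          then have False using False hyp by (auto simp: D_def d_def)
          then show "\<exists>g. ((\<lambda>s. proj f a (l0 + p + s *\<^sub>R e0) \<omega> - proj f a (l0 + p + s *\<^sub>R e0) \<tau>)
                  has_real_derivative g) (at t) \<and> c * dsym f {a..b} l0 \<omega> \<tau> powr (1 + \<beta>) \<le> \<bar>g\<bar>" by blast
        qed
      next
        case True
        then obtain zs where zs: "zs \<in> ball l0 \<epsilon>0" "\<bar>D zs\<bar> < c * d powr (1 + \<beta>)" by blast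
        have zsS: "zs \<in> S" using inS[OF zs(1)] .
        have zsI: "zs \<in> interior S" using inI[OF zs(1)] .
        note bs = bad[OF zs]
        have dxs: "\<bar>x1 zs - x2 zs\<bar> < \<eta>"
        proof -
          have i1: "1 * \<bar>x1 zs - x2 zs\<bar> \<le> (C2 * k + C3 + 1) * \<bar>x1 zs - x2 zs\<bar>"
            using C2 C3 by (intro mult_right_mono) auto
          have i2: "(C2 * k + C3 + 1) * \<bar>x1 zs - x2 zs\<bar> \<le> \<eta> / 4" using bs by blast
          have "\<bar>x1 zs - x2 zs\<bar> \<le> \<eta> / 4" using order_trans[OF i1 i2] by simp
          then show ?thesis using eta by linarith
        qed
        obtain g where g: "((\<lambda>\<mu>. proj f a \<mu> \<omega>' - proj f a \<mu> \<tau>') has_derivative (\<lambda>h. g \<bullet> h)) (at zs within S)"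
            "\<eta> \<le> norm g"
          using MTc[OF zsS \<omega>' \<tau>' d0'] dxs by (auto simp: x1_def x2_def)
        have gH: "g = H zs"
        proof -
          have dA: "((\<lambda>\<mu>. proj f a \<mu> \<omega>' - proj f a \<mu> \<tau>') has_derivative (\<lambda>h. g \<bullet> h)) (at zs)"
            using g(1) unfolding at_within_interior[OF zsI] .
          have dB: "((\<lambda>\<mu>. proj f a \<mu> \<omega>' - proj f a \<mu> \<tau>') has_derivative (\<lambda>h. H zs \<bullet> h)) (at zs)"
            using has_derivative_diff[OF proj_deriv[OF \<omega>' zsS] proj_deriv[OF \<tau>' zsS]]
            unfolding at_within_interior[OF zsI] by (simp add: H_def inner_diff_left)
          have "(\<lambda>h. g \<bullet> h) = (\<lambda>h. H zs \<bullet> h)" by (rule has_derivative_unique[OF dA dB])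
          then have "g \<bullet> (g - H zs) = H zs \<bullet> (g - H zs)" by metis
          then have "(g - H zs) \<bullet> (g - H zs) = 0" by (simp add: inner_diff_left)
          then show ?thesis by simp
        qed
        define e where "e = H zs /\<^sub>R norm (H zs)"
        have Hn: "\<eta> \<le> norm (H zs)" using g gH by simp
        have Hpos: "0 < norm (H zs)" using Hn eta by linarith
        have en: "norm e = 1" using Hpos by (simp add: e_def)
        have ie: "\<bar>v \<bullet> e\<bar> \<le> norm v" for v
          using Cauchy_Schwarz_ineq2[of v e] en by simp
        have He: "3 * \<eta> / 4 \<le> H z \<bullet> e" if zb: "z \<in> ball l0 \<epsilon>0" for z
        proof -
          have zS: "z \<in> S" using inS[OF zb] .
          have s1: "H zs \<bullet> e = norm (H zs)"
            using Hpos by (simp add: e_def inner_scaleR_right dot_square_norm power2_eq_square)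
          have "norm (H z - H zs) \<le> norm (G z \<omega>' - G zs \<omega>') + norm (G z \<tau>' - G zs \<tau>')"
          proof -
            have "H z - H zs = (G z \<omega>' - G zs \<omega>') - (G z \<tau>' - G zs \<tau>')" by (simp add: H_def algebra_simps)
            then show ?thesis using norm_triangle_ineq4[of "G z \<omega>' - G zs \<omega>'" "G z \<tau>' - G zs \<tau>'"] by simp
          qed
          also have "\<dots> \<le> CH * norm (z - zs) powr \<delta> + CH * norm (z - zs) powr \<delta>"
            using G_hold[OF \<omega>' zsS zS] G_hold[OF \<tau>' zsS zS] by (intro add_mono)
          also have "\<dots> \<le> \<eta> / 8 + \<eta> / 8" using F1[OF zb zs(1)] by (intro add_mono)
          finally have nd: "norm (H z - H zs) \<le> \<eta> / 4" by simp
          have "H z \<bullet> e = H zs \<bullet> e + (H z - H zs) \<bullet> e" by (simp add: inner_diff_left)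
          then show ?thesis using s1 ie[of "H z - H zs"] nd Hn by linarith
        qed
        show ?thesis
        proof (intro exI[of _ e] conjI en allI impI)
          fix p t assume pt: "p \<in> ball 0 \<epsilon>0 \<and> p \<bullet> e = 0 \<and> p + t *\<^sub>R e \<in> ball 0 \<epsilon>0"
            and hyp: "\<bar>proj f a (l0 + p + t *\<^sub>R e) \<omega> - proj f a (l0 + p + t *\<^sub>R e) \<tau>\<bar>
              < c * dsym f {a..b} l0 \<omega> \<tau> powr (1 + \<beta>)"
          define L where "L = l0 + p + t *\<^sub>R e"
          have L: "L \<in> ball l0 \<epsilon>0" using ballmem pt by (simp add: L_def)
          have LS: "L \<in> S" using inS[OF L] .
          have hypD: "\<bar>D L\<bar> < c * d powr (1 + \<beta>)" using hyp by (simp add: D_def d_def L_def)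
          note bl = bad[OF L hypD]
          have bl1: "(C2 * k + C3 + 1) * \<bar>x1 L - x2 L\<bar> \<le> \<eta> / 4" using bl by blast
          have bl2: "d * u \<le> Q * \<bar>Bw w L (x1 L)\<bar>" using bl by blast
          have bl3: "c * d powr (1 + \<beta>) \<le> c * d * u * ba" using bl by blast
          have bl4: "0 < d" using bl by blast
          define gv where "gv = (G L \<omega> - G L \<tau>) \<bullet> e"
          have der: "((\<lambda>s. proj f a (l0 + p + s *\<^sub>R e) \<omega> - proj f a (l0 + p + s *\<^sub>R e) \<tau>) has_real_derivative gv) (at t)"
            using line_deriv[OF \<omega> \<tau> inI[OF L[unfolded L_def]]] by (simp add: gv_def L_def)
          have bound: "c * d powr (1 + \<beta>) \<le> \<bar>gv\<bar>"
          proof -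
            define B where "B = \<bar>Bw w L (x1 L)\<bar>"
            define \<Delta> where "\<Delta> = \<bar>x1 L - x2 L\<bar>"
            note XL = xX[OF LS]
            have B0: "0 \<le> B" by (simp add: B_def)
            have gv_eq: "gv = (Aw w L (x1 L) - Aw w L (x2 L)) \<bullet> e + Bw w L (x1 L) * (H L \<bullet> e)
                + (Bw w L (x1 L) - Bw w L (x2 L)) * (G L \<tau>' \<bullet> e)"
              unfolding gv_def Geq[OF LS] by (simp add: inner_add_left)
            have t1: "\<bar>(Aw w L (x1 L) - Aw w L (x2 L)) \<bullet> e\<bar> \<le> C2 * k * B * \<Delta>"
            proof -
              have "norm (Aw w L (x2 L) - Aw w L (x1 L)) \<le> C2 * length w * \<bar>Bw w L (x1 L)\<bar> * \<bar>x2 L - x1 L\<bar>"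
                by (rule Aw_lip[OF w LS XL(2) XL(1)])
              then have "norm (Aw w L (x1 L) - Aw w L (x2 L)) \<le> C2 * k * B * \<Delta>"
                by (simp add: lw B_def \<Delta>_def norm_minus_commute abs_minus_commute)
              then show ?thesis using ie[of "Aw w L (x1 L) - Aw w L (x2 L)"] by linarith
            qed
            have t2: "\<bar>(Bw w L (x1 L) - Bw w L (x2 L)) * (G L \<tau>' \<bullet> e)\<bar> \<le> C3 * B * \<Delta>"
            proof -
              have "\<bar>Bw w L (x2 L) - Bw w L (x1 L)\<bar> \<le> K0 * KD * SG (length w) * \<bar>Bw w L (x1 L)\<bar> * \<bar>x2 L - x1 L\<bar>"
                by (rule Bw_lip[OF w LS XL(2) XL(1)])
              then have a1: "\<bar>Bw w L (x1 L) - Bw w L (x2 L)\<bar> \<le> K0 * KD * SG k * (B * \<Delta>)"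
                by (simp add: lw B_def \<Delta>_def abs_minus_commute mult.assoc)
              have a2: "\<bar>G L \<tau>' \<bullet> e\<bar> \<le> LL" using ie[of "G L \<tau>'"] G_props(2)[OF \<tau>' LS] by linarith
              have "\<bar>(Bw w L (x1 L) - Bw w L (x2 L)) * (G L \<tau>' \<bullet> e)\<bar> \<le> (K0 * KD * SG k * (B * \<Delta>)) * LL"
                unfolding abs_mult using a1 a2 by (intro mult_mono) auto
              also have "\<dots> \<le> (K0 * KD * (1 / (1 - \<gamma>2)) * (B * \<Delta>)) * LL"
                using SG_le[of k] K0_pos KD_ge1 LL_pos B0 by (intro mult_right_mono mult_left_mono) (auto simp: \<Delta>_def)
              also have "\<dots> = C3 * B * \<Delta>" by (simp add: C3_def)
              finally show ?thesis .
            qed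
            have t3: "\<bar>Bw w L (x1 L) * (H L \<bullet> e)\<bar> = B * (H L \<bullet> e)"
              using He[OF L] eta by (simp add: B_def abs_mult)
            have tri: "\<bar>x + y + z'\<bar> \<ge> \<bar>y\<bar> - \<bar>x\<bar> - \<bar>z'\<bar>" for x y z' :: real by arith
            have gv1: "\<bar>gv\<bar> \<ge> B * (H L \<bullet> e) - C2 * k * B * \<Delta> - C3 * B * \<Delta>"
              using tri[of "(Aw w L (x1 L) - Aw w L (x2 L)) \<bullet> e" "Bw w L (x1 L) * (H L \<bullet> e)"
                  "(Bw w L (x1 L) - Bw w L (x2 L)) * (G L \<tau>' \<bullet> e)"] t1 t2 t3 gv_eq by linarith
            have "(C2 * k + C3) * \<Delta> \<le> \<eta> / 4"
            proof -
              have "(C2 * k + C3) * \<Delta> \<le> (C2 * k + C3 + 1) * \<Delta>" by (intro mult_right_mono) (auto simp: \<Delta>_def)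
              then show ?thesis using bl1 by (simp add: \<Delta>_def)
            qed
            then have "B * ((C2 * k + C3) * \<Delta>) \<le> B * (\<eta> / 4)" using B0 by (intro mult_left_mono)
            moreover have "B * (3 * \<eta> / 4) \<le> B * (H L \<bullet> e)" using He[OF L] B0 by (intro mult_left_mono)
            ultimately have gv2: "B * (\<eta> / 2) \<le> \<bar>gv\<bar>" using gv1 by (simp add: algebra_simps)
            have "c * d powr (1 + \<beta>) \<le> c * d * u * ba" using bl3 .
            also have "\<dots> = (d * u) * (c * ba)" by (simp add: algebra_simps)
            also have "\<dots> \<le> (Q * B) * (\<eta> / (2 * Q))"
            proof (rule mult_mono)
              show "d * u \<le> Q * B" using bl2 by (simp add: B_def)
              show "c * ba \<le> \<eta> / (2 * Q)" by (rule cb)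
              show "0 \<le> Q * B" using Q B0 by simp
              show "0 \<le> c * ba" using c ba by simp
            qed
            also have "\<dots> = B * (\<eta> / 2)" using Q by (simp add: field_simps)
            finally show ?thesis using gv2 by linarith
          qed
          show "\<exists>g. ((\<lambda>s. proj f a (l0 + p + s *\<^sub>R e) \<omega> - proj f a (l0 + p + s *\<^sub>R e) \<tau>)
                  has_real_derivative g) (at t) \<and> c * dsym f {a..b} l0 \<omega> \<tau> powr (1 + \<beta>) \<le> \<bar>g\<bar>"
            using der bound by (auto simp: d_def)
        qed
      qed
    qed
  show ?thesis
    apply (rule exI[of _ c])
    apply (rule conjI[OF c])
    apply (rule exI[of _ \<epsilon>0])
    using \<epsilon>0(1,2) main by blast
qed

end

theorem mainTheorem12:
  fixes f :: "nat \<Rightarrow> 'a::euclidean_space \<Rightarrow> real \<Rightarrow> real"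
    and m :: nat and a b \<delta> \<beta> :: real and U :: "'a set" and l0 :: 'a
  assumes "a < b" and "bounded U" and "open U"
    and "0 < \<delta>" and "\<delta> < 1"
    and "MA f m {a..b} U \<delta>" and "MT f m a U"
    and "l0 \<in> U" and "0 < \<beta>"
  shows "\<exists>c>0. \<exists>\<epsilon>0>0. ball l0 \<epsilon>0 \<subseteq> U \<and>
    (\<forall>\<omega>\<in>seqs m. \<forall>\<tau>\<in>seqs m. \<exists>e. norm e = 1 \<and>
      (\<forall>p t. p \<in> ball 0 \<epsilon>0 \<and> p \<bullet> e = 0 \<and> p + t *\<^sub>R e \<in> ball 0 \<epsilon>0 \<longrightarrow>
         \<bar>proj f a (l0 + p + t *\<^sub>R e) \<omega> - proj f a (l0 + p + t *\<^sub>R e) \<tau>\<bar>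
            < c * dsym f {a..b} l0 \<omega> \<tau> powr (1 + \<beta>) \<longrightarrow>
         (\<exists>g. ((\<lambda>s. proj f a (l0 + p + s *\<^sub>R e) \<omega> - proj f a (l0 + p + s *\<^sub>R e) \<tau>)
                  has_real_derivative g) (at t)
              \<and> c * dsym f {a..b} l0 \<omega> \<tau> powr (1 + \<beta>) \<le> \<bar>g\<bar>)))"
proof -
  note ab = assms(1) and dl = assms(4,5)
  obtain fx fxx fl flx M \<gamma>1 \<gamma>2 where
    g: "0 < \<gamma>1" "\<gamma>1 \<le> \<gamma>2" "\<gamma>2 < 1" and
    P1: "\<forall>j\<in>{1..m}. \<forall>l\<in>closure U. f j l ` {a..b} \<subseteq> {a..b} \<and>
          (\<forall>x\<in>{a..b}.
             (f j l has_real_derivative fx j l x) (at x within {a..b}) \<and>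
             (fx j l has_real_derivative fxx j l x) (at x within {a..b}) \<and>
             ((\<lambda>\<mu>. f j \<mu> x) has_derivative (\<lambda>h. fl j l x \<bullet> h)) (at l within closure U) \<and>
             ((\<lambda>y. fl j l y) has_vector_derivative flx j l x) (at x within {a..b}) \<and>
             ((\<lambda>\<mu>. fx j \<mu> x) has_derivative (\<lambda>h. flx j l x \<bullet> h)) (at l within closure U) \<and>
             \<gamma>1 \<le> \<bar>fx j l x\<bar> \<and> \<bar>fx j l x\<bar> \<le> \<gamma>2 \<and>
             \<bar>fxx j l x\<bar> \<le> M \<and> norm (fl j l x) \<le> M \<and> norm (flx j l x) \<le> M)" and
    P3: "\<forall>j\<in>{1..m}. \<forall>l\<in>closure U. \<forall>\<mu>\<in>closure U. \<forall>x\<in>{a..b}. \<forall>y\<in>{a..b}.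
          \<bar>fx j l x - fx j l y\<bar> \<le> M * \<bar>x - y\<bar> powr \<delta> \<and>
          \<bar>fx j l x - fx j \<mu> x\<bar> \<le> M * norm (l - \<mu>) powr \<delta> \<and>
          \<bar>fxx j l x - fxx j l y\<bar> \<le> M * \<bar>x - y\<bar> powr \<delta> \<and>
          \<bar>fxx j l x - fxx j \<mu> x\<bar> \<le> M * norm (l - \<mu>) powr \<delta> \<and>
          norm (fl j l x - fl j l y) \<le> M * \<bar>x - y\<bar> powr \<delta> \<and>
          norm (fl j l x - fl j \<mu> x) \<le> M * norm (l - \<mu>) powr \<delta> \<and>
          norm (flx j l x - flx j l y) \<le> M * \<bar>x - y\<bar> powr \<delta> \<and>
          norm (flx j l x - flx j \<mu> x) \<le> M * norm (l - \<mu>) powr \<delta>"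
    and Pc: "\<forall>j\<in>{1..m}. continuous_on (closure U \<times> {a..b}) (\<lambda>(l, x). flx j l x)"
    using assms(6) unfolding MA_def
    apply (elim exE conjE)
    apply (rule that)
    apply assumption+
    done
  obtain \<eta> where eta: "0 < \<eta>" and MT1: "\<forall>l\<in>closure U. \<forall>\<omega>\<in>seqs m. \<forall>\<tau>\<in>seqs m.
       \<omega> 0 \<noteq> \<tau> 0 \<and> \<bar>proj f a l \<omega> - proj f a l \<tau>\<bar> < \<eta> \<longrightarrow>
       (\<exists>g. ((\<lambda>\<mu>. proj f a \<mu> \<omega> - proj f a \<mu> \<tau>) has_derivative (\<lambda>h. g \<bullet> h)) (at l within closure U)
            \<and> \<eta> \<le> norm g)"
    using assms(7) unfolding MT_def
    apply (elim exE conjE)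
    apply (rule that)
    apply assumption+
    done
  obtain r0 where r0: "0 < r0" "ball l0 r0 \<subseteq> U" using assms(3,8) open_contains_ball by blast
  define r where "r = min r0 (1/2)"
  have r: "0 < r" "r \<le> 1/2" "ball l0 r \<subseteq> U" using r0 by (auto simp: r_def)
  define S where "S = ball l0 r"
  have SU: "S \<subseteq> closure U" using r closure_subset by (auto simp: S_def)
  define M' where "M' = max M 1"
  have MM: "M \<le> M'" "0 < M'" by (auto simp: M'_def)
  have pw0: "0 \<le> t powr \<delta>" for t :: real by simp
  interpret ifs f m a b \<delta> S fx fxx fl flx M' \<gamma>1 \<gamma>2
  proof
    show "a < b" by (rule ab)
    show "0 < \<delta>" "\<delta> \<le> 1" using dl by auto
    show "convex S" by (simp add: S_def)
    show "norm (l - \<mu>) \<le> 1" if "l \<in> S" "\<mu> \<in> S" for l \<mu>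
    proof -
      have "norm (l - \<mu>) \<le> dist l l0 + dist l0 \<mu>" using dist_triangle[of l \<mu> l0] by (simp add: dist_norm)
      also have "\<dots> \<le> 1" using that r by (auto simp: S_def dist_commute)
      finally show ?thesis .
    qed
    show "0 < \<gamma>1" "\<gamma>1 \<le> \<gamma>2" "\<gamma>2 < 1" by (rule g)+
    show "0 < M'" by (rule MM)
    fix j l x assume j: "j \<in> {1..m}" and l: "l \<in> S" and x: "x \<in> {a..b}"
    have lU: "l \<in> closure U" using l SU by auto
    note P = P1[rule_format, OF j lU]
    have Px: "(f j l has_real_derivative fx j l x) (at x within {a..b}) \<and>
             (fx j l has_real_derivative fxx j l x) (at x within {a..b}) \<and>
             ((\<lambda>\<mu>. f j \<mu> x) has_derivative (\<lambda>h. fl j l x \<bullet> h)) (at l within closure U) \<and>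
             ((\<lambda>y. fl j l y) has_vector_derivative flx j l x) (at x within {a..b}) \<and>
             ((\<lambda>\<mu>. fx j \<mu> x) has_derivative (\<lambda>h. flx j l x \<bullet> h)) (at l within closure U) \<and>
             \<gamma>1 \<le> \<bar>fx j l x\<bar> \<and> \<bar>fx j l x\<bar> \<le> \<gamma>2 \<and>
             \<bar>fxx j l x\<bar> \<le> M \<and> norm (fl j l x) \<le> M \<and> norm (flx j l x) \<le> M"
      using P x by blast
    show "f j l x \<in> {a..b}" using P x by blast
    show "(f j l has_real_derivative fx j l x) (at x within {a..b})" using Px by blast
    show "(fx j l has_real_derivative fxx j l x) (at x within {a..b})" using Px by blast
    show "((\<lambda>\<mu>. f j \<mu> x) has_derivative (\<lambda>h. fl j l x \<bullet> h)) (at l within S)"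
      using Px has_derivative_subset[OF _ SU] by blast
    show "((\<lambda>y. fl j l y) has_vector_derivative flx j l x) (at x within {a..b})" using Px by blast
    show "\<gamma>1 \<le> \<bar>fx j l x\<bar> \<and> \<bar>fx j l x\<bar> \<le> \<gamma>2" using Px by blast
    show "\<bar>fxx j l x\<bar> \<le> M' \<and> norm (fl j l x) \<le> M' \<and> norm (flx j l x) \<le> M'" using Px MM by linarith
  next
    fix j l \<mu> x assume j: "j \<in> {1..m}" and l: "l \<in> S" and \<mu>: "\<mu> \<in> S" and x: "x \<in> {a..b}"
    have lU: "l \<in> closure U" "\<mu> \<in> closure U" using l \<mu> SU by auto
    have h: "\<bar>fx j l x - fx j \<mu> x\<bar> \<le> M * norm (l - \<mu>) powr \<delta> \<and> norm (fl j l x - fl j \<mu> x) \<le> M * norm (l - \<mu>) powr \<delta>"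
      using P3[rule_format, OF j lU x x] by blast
    have "M * norm (l - \<mu>) powr \<delta> \<le> M' * norm (l - \<mu>) powr \<delta>" using MM by (intro mult_right_mono) auto
    then show "\<bar>fx j l x - fx j \<mu> x\<bar> \<le> M' * norm (l - \<mu>) powr \<delta>"
      "norm (fl j l x - fl j \<mu> x) \<le> M' * norm (l - \<mu>) powr \<delta>" using h by linarith+
  qed
  have MTc: "\<exists>g. ((\<lambda>\<mu>. proj f a \<mu> \<omega> - proj f a \<mu> \<tau>) has_derivative (\<lambda>h. g \<bullet> h)) (at l within S) \<and> \<eta> \<le> norm g"
    if prem: "l \<in> S" "\<omega> \<in> seqs m" "\<tau> \<in> seqs m" "\<omega> 0 \<noteq> \<tau> 0" "\<bar>proj f a l \<omega> - proj f a l \<tau>\<bar> < \<eta>" for l \<omega> \<tau>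
  proof -
    have lU: "l \<in> closure U" using prem SU by auto
    obtain g where "((\<lambda>\<mu>. proj f a \<mu> \<omega> - proj f a \<mu> \<tau>) has_derivative (\<lambda>h. g \<bullet> h)) (at l within closure U)"
      "\<eta> \<le> norm g" using MT1[rule_format, OF lU prem(2,3)] prem(4,5) by blast
    then show ?thesis using has_derivative_subset[OF _ SU] by blast
  qed
  obtain c \<epsilon>0 where c: "c > 0" "\<epsilon>0 > 0" "\<epsilon>0 \<le> r"
    and main: "\<forall>\<omega>\<in>seqs m. \<forall>\<tau>\<in>seqs m. \<exists>e. norm e = 1 \<and>
      (\<forall>p t. p \<in> ball 0 \<epsilon>0 \<and> p \<bullet> e = 0 \<and> p + t *\<^sub>R e \<in> ball 0 \<epsilon>0 \<longrightarrow>
         \<bar>proj f a (l0 + p + t *\<^sub>R e) \<omega> - proj f a (l0 + p + t *\<^sub>R e) \<tau>\<bar>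
            < c * dsym f {a..b} l0 \<omega> \<tau> powr (1 + \<beta>) \<longrightarrow>
         (\<exists>g. ((\<lambda>s. proj f a (l0 + p + s *\<^sub>R e) \<omega> - proj f a (l0 + p + s *\<^sub>R e) \<tau>)
                  has_real_derivative g) (at t)
              \<and> c * dsym f {a..b} l0 \<omega> \<tau> powr (1 + \<beta>) \<le> \<bar>g\<bar>))"
    using final[of r l0 \<eta> \<beta>, OF r(1) _ eta assms(9) MTc] by (auto simp: S_def)
  have "ball l0 \<epsilon>0 \<subseteq> U" using c r by auto
  then show ?thesis using c main by blast
qed

end
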